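(* Composition of planar orders is associative: if $(G_1,\prec_1),(G_2,\prec_2),(G_3,\prec_3)$ are POP-graphs such that the number of output edges of $G_1$ equals the number of input edges of $G_2$ and the number of output edges of $G_2$ equals the number of input edges of $G_3$, then under the natural identification $(G_3\circ G_2)\circ G_1=G_3\circ(G_2\circ G_1)$ one has $(\prec_3\circ\prec_2)\circ\prec_1=\prec_3\circ(\prec_2\circ\prec_1)$.
   Context: A progressive graph is a finite directed acyclic graph (parallel edges allowed) in which every source and every sink has degree one; degree-one vertices are boundary vertices. An input edge is an edge whose initial vertex is a boundary vertex; an output edge one whose terminal vertex is a boundary vertex. For edges write $e\to e'$ if $e\neq e'$ and there is a directed path whose first edge is $e$ and last edge is $e'$. A planar order on $G$ is a linear order $\prec$ on $E(G)$ such that (P1) $e_1\to e_2$ implies $e_1\prec e_2$; (P2) if $e_1\prec e_2\prec e_3$ and $e_1\to e_3$ then $e_1\to e_2$ or $e_2\to e_3$. A POP-graph is a progressive graph with a planar order. Composition: let $(G_1,\prec_1)$, $(G_2,\prec_2)$ be POP-graphs, $G_1$ with output edges $o_1\prec_1\cdots\prec_1 o_n$ and $G_2$ with input edges $i_1\prec_2\cdots\prec_2 i_n$. The progressive graph $G_2\circ G_1$ is obtained from $G_1\sqcup G_2$ by deleting the sinks of $G_1$, the sources of $G_2$ and the edges $o_k,i_k$, and adding for each $k$ a new edge $\overline{e_k}$ from the initial vertex of $o_k$ to the terminal vertex of $i_k$. Let $Q_1=\{e\in E(G_1): e\prec_1 o_1\}$, $Q_k=\{e: o_{k-1}\prec_1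 e\prec_1 o_k\}$ ($2\le k\le n$), $P_k=\{e\in E(G_2): i_k\prec_2 e\prec_2 i_{k+1}\}$ ($1\le k\le n-1$), $P_n=\{e: i_n\prec_2 e\}$. The composition $\prec_2\circ\prec_1$ is the linear order on $E(G_2\circ G_1)$ listing $Q_1,\{\overline{e_1}\},P_1,Q_2,\{\overline{e_2}\},P_2,\dots,Q_n,\{\overline{e_n}\},P_n$ consecutively, each $Q_k$ ordered by $\prec_1$ and each $P_k$ by $\prec_2$. *)

theory Defs
  imports Main
begin

text \<open>Edges carry names of type 'a set:
  the edge obtained by gluing an output edge o and an input edge i in a composition is
  named o \<union> i. With pairwise disjoint names this realises the disjoint union and makes
  the natural identification of (G3 o G2) o G1 with G3 o (G2 o G1) a literal equality.\<close>

record ('v, 'e) pgraph =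
  verts :: "'v set"
  edges :: "'e set"
  src :: "'e \<Rightarrow> 'v"
  tgt :: "'e \<Rightarrow> 'v"

definition indeg :: "('v, 'e) pgraph \<Rightarrow> 'v \<Rightarrow> nat" where
  "indeg G v = card {e \<in> edges G. tgt G e = v}"

definition outdeg :: "('v, 'e) pgraph \<Rightarrow> 'v \<Rightarrow> nat" where
  "outdeg G v = card {e \<in> edges G. src G e = v}"

definition deg :: "('v, 'e) pgraph \<Rightarrow> 'v \<Rightarrow> nat" where
  "deg G v = indeg G v + outdeg G v"

definition sources :: "('v, 'e) pgraph \<Rightarrow> 'v set" where
  "sources G = {v \<in> verts G. indeg G v = 0}"

definition sinks :: "('v, 'e) pgraph \<Rightarrow> 'v set" where
  "sinks G = {v \<in> verts G. outdeg G v = 0}"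

definition boundary :: "('v, 'e) pgraph \<Rightarrow> 'v set" where
  "boundary G = {v \<in> verts G. deg G v = 1}"

definition estep :: "('v, 'e) pgraph \<Rightarrow> ('e \<times> 'e) set" where
  "estep G = {(e, e'). e \<in> edges G \<and> e' \<in> edges G \<and> tgt G e = src G e'}"

definition reach :: "('v, 'e) pgraph \<Rightarrow> 'e \<Rightarrow> 'e \<Rightarrow> bool" where
  "reach G e e' \<longleftrightarrow> e \<noteq> e' \<and> (e, e') \<in> (estep G)\<^sup>+"

definition progressive :: "('v, 'e) pgraph \<Rightarrow> bool" where
  "progressive G \<longleftrightarrow>
     finite (verts G) \<and> finite (edges G) \<and>
     (\<forall>e \<in> edges G. src G e \<in> verts G \<and> tgt G e \<in> verts G) \<and>
     (\<forall>e \<in> edges G. (e, e) \<notin> (estep G)\<^sup>+) \<and>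
     (\<forall>v \<in> sources G. deg G v = 1) \<and>
     (\<forall>v \<in> sinks G. deg G v = 1)"

definition inputs :: "('v, 'e) pgraph \<Rightarrow> 'e set" where
  "inputs G = {e \<in> edges G. src G e \<in> boundary G}"

definition outputs :: "('v, 'e) pgraph \<Rightarrow> 'e set" where
  "outputs G = {e \<in> edges G. tgt G e \<in> boundary G}"

definition planar_order :: "('v, 'e) pgraph \<Rightarrow> ('e \<times> 'e) set \<Rightarrow> bool" where
  "planar_order G R \<longleftrightarrow>
     R \<subseteq> edges G \<times> edges G \<and> strict_linear_order_on (edges G) R \<and>
     (\<forall>e1 e2. reach G e1 e2 \<longrightarrow> (e1, e2) \<in> R) \<and>
     (\<forall>e1 e2 e3. (e1, e2) \<in> R \<and> (e2, e3) \<in> R \<and> reach G e1 e3 \<longrightarrow>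
                  reach G e1 e2 \<or> reach G e2 e3)"

definition pop :: "('v, 'e) pgraph \<Rightarrow> ('e \<times> 'e) set \<Rightarrow> bool" where
  "pop G R \<longleftrightarrow> progressive G \<and> planar_order G R"

text \<open>number of elements of S strictly before x w.r.t. R; and the k-th element (0-based)\<close>
definition rnk :: "('e \<times> 'e) set \<Rightarrow> 'e set \<Rightarrow> 'e \<Rightarrow> nat" where
  "rnk R S x = card {y \<in> S. (y, x) \<in> R}"

definition nth_in :: "('e \<times> 'e) set \<Rightarrow> 'e set \<Rightarrow> nat \<Rightarrow> 'e" where
  "nth_in R S k = (THE x. x \<in> S \<and> rnk R S x = k)"

text \<open>Composition G2 o G1. The k-th (0-based) glued edge joins the k-th output o_k of G1
  with the k-th input i_k of G2.\<close>
definition glue :: "('v, 'a set) pgraph \<Rightarrow> ('a set \<times> 'a set) set \<Rightarrow>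
                    ('v, 'a set) pgraph \<Rightarrow> ('a set \<times> 'a set) set \<Rightarrow> nat \<Rightarrow> 'a set" where
  "glue G2 R2 G1 R1 k = nth_in R1 (outputs G1) k \<union> nth_in R2 (inputs G2) k"

definition glue_idx :: "('v, 'a set) pgraph \<Rightarrow> ('a set \<times> 'a set) set \<Rightarrow>
                    ('v, 'a set) pgraph \<Rightarrow> ('a set \<times> 'a set) set \<Rightarrow> 'a set \<Rightarrow> nat" where
  "glue_idx G2 R2 G1 R1 x = (THE k. k < card (outputs G1) \<and> x = glue G2 R2 G1 R1 k)"

definition comp_graph :: "('v, 'a set) pgraph \<Rightarrow> ('a set \<times> 'a set) set \<Rightarrow>
                    ('v, 'a set) pgraph \<Rightarrow> ('a set \<times> 'a set) set \<Rightarrow> ('v, 'a set) pgraph" where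
  "comp_graph G2 R2 G1 R1 =
    \<lparr> verts = (verts G1 - sinks G1) \<union> (verts G2 - sources G2),
      edges = (edges G1 - outputs G1) \<union> (edges G2 - inputs G2)
              \<union> glue G2 R2 G1 R1 ` {..<card (outputs G1)},
      src = (\<lambda>x. if x \<in> edges G1 - outputs G1 then src G1 x
                 else if x \<in> edges G2 - inputs G2 then src G2 x
                 else src G1 (nth_in R1 (outputs G1) (glue_idx G2 R2 G1 R1 x))),
      tgt = (\<lambda>x. if x \<in> edges G1 - outputs G1 then tgt G1 x
                 else if x \<in> edges G2 - inputs G2 then tgt G2 x
                 else tgt G2 (nth_in R2 (inputs G2) (glue_idx G2 R2 G1 R1 x))) \<rparr>"

text \<open>Block numbers realising the listing Q_1, {e_1}, P_1, Q_2, ..., Q_n, {e_n}, P_n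
  (with 1-based k: Q_k has block 3k, the glued edge e_k block 3k+1, P_k block 3k+2).\<close>
definition comp_block :: "('v, 'a set) pgraph \<Rightarrow> ('a set \<times> 'a set) set \<Rightarrow>
                    ('v, 'a set) pgraph \<Rightarrow> ('a set \<times> 'a set) set \<Rightarrow> 'a set \<Rightarrow> nat" where
  "comp_block G2 R2 G1 R1 x =
    (if x \<in> edges G1 - outputs G1 then 3 * (rnk R1 (outputs G1) x + 1)
     else if x \<in> edges G2 - inputs G2 then 3 * rnk R2 (inputs G2) x + 2
     else 3 * (glue_idx G2 R2 G1 R1 x + 1) + 1)"

definition comp_order :: "('v, 'a set) pgraph \<Rightarrow> ('a set \<times> 'a set) set \<Rightarrow>
                    ('v, 'a set) pgraph \<Rightarrow> ('a set \<times> 'a set) set \<Rightarrow> ('a set \<times> 'a set) set" where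
  "comp_order G2 R2 G1 R1 =
    (let E = edges (comp_graph G2 R2 G1 R1); b = comp_block G2 R2 G1 R1 in
     {(x, y). x \<in> E \<and> y \<in> E \<and>
        (b x < b y \<or>
         (b x = b y \<and>
            ((x \<in> edges G1 - outputs G1 \<and> y \<in> edges G1 - outputs G1 \<and> (x, y) \<in> R1) \<or>
             (x \<in> edges G2 - inputs G2 \<and> y \<in> edges G2 - inputs G2 \<and> (x, y) \<in> R2))))})"

definition disjoint_names :: "('v, 'a set) pgraph \<Rightarrow> bool" where
  "disjoint_names G \<longleftrightarrow> (\<forall>e \<in> edges G. e \<noteq> {}) \<and>
     (\<forall>e \<in> edges G. \<forall>e' \<in> edges G. e \<noteq> e' \<longrightarrow> e \<inter> e' = {})"

end

theory Submission
  imports Defs "HOL-Library.Product_Lexorder" "HOL-Library.Option_ord"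
begin


definition korder :: "('e \<times> 'e) set \<Rightarrow> 'e set \<Rightarrow> ('e \<Rightarrow> 'k::linorder) \<Rightarrow> bool" where
  "korder R E f \<longleftrightarrow> R = {(x,y). x \<in> E \<and> y \<in> E \<and> f x < f y} \<and> inj_on f E"

lemma korder_mem: "korder R E f \<Longrightarrow> (x,y) \<in> R \<longleftrightarrow> x \<in> E \<and> y \<in> E \<and> f x < f y"
  unfolding korder_def by auto

lemma korder_inj: "korder R E f \<Longrightarrow> x \<in> E \<Longrightarrow> y \<in> E \<Longrightarrow> f x = f y \<longleftrightarrow> x = y"
  unfolding korder_def inj_on_def by auto

lemma rnk_korder: assumes "korder R E f" "T \<subseteq> E" "x \<in> E"
  shows "rnk R T x = card {y\<in>T. f y < f x}"
proof -
  have "{y\<in>T. (y,x) \<in> R} = {y\<in>T. f y < f x}" using assms korder_mem[OF assms(1)] by blast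
  then show ?thesis unfolding rnk_def by simp
qed

lemma rnk_less_iff: assumes "korder R E f" "T \<subseteq> E" "finite T" "t \<in> T" "x \<in> E"
  shows "rnk R T t < rnk R T x \<longleftrightarrow> f t < f x"
proof
  assume a: "f t < f x"
  have "{y\<in>T. f y < f t} \<subset> {y\<in>T. f y < f x}" using a assms(4) by auto
  then show "rnk R T t < rnk R T x" using rnk_korder[OF assms(1,2)] assms
    by (simp add: psubset_card_mono subsetD)
next
  assume a: "rnk R T t < rnk R T x"
  show "f t < f x"
  proof (rule ccontr)
    assume "\<not> f t < f x"
    then have "{y\<in>T. f y < f x} \<subseteq> {y\<in>T. f y < f t}" by auto
    then have "rnk R T x \<le> rnk R T t" using rnk_korder[OF assms(1,2)] assms
      by (simp add: card_mono subsetD)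
    then show False using a by simp
  qed
qed

lemma rnk_mono: assumes "korder R E f" "T \<subseteq> E" "finite T" "x \<in> E" "y \<in> E" "f x \<le> f y"
  shows "rnk R T x \<le> rnk R T y"
proof -
  have "{z\<in>T. f z < f x} \<subseteq> {z\<in>T. f z < f y}" using assms(6) by auto
  then show ?thesis using rnk_korder[OF assms(1,2)] assms by (simp add: card_mono)
qed

lemma rnk_lt_card: assumes "korder R E f" "T \<subseteq> E" "finite T" "x \<in> T"
  shows "rnk R T x < card T"
proof -
  have "{z\<in>T. f z < f x} \<subset> T" using assms(4) by auto
  then show ?thesis using rnk_korder[OF assms(1,2)] assms by (simp add: psubset_card_mono subsetD)
qed

lemma rnk_inj: assumes "korder R E f" "T \<subseteq> E" "finite T"
  shows "inj_on (rnk R T) T"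
proof (rule inj_onI)
  fix x y assume xy: "x \<in> T" "y \<in> T" "rnk R T x = rnk R T y"
  show "x = y"
  proof (rule ccontr)
    assume "x \<noteq> y"
    then have "f x \<noteq> f y" using korder_inj[OF assms(1)] xy assms(2) by auto
    then have "f x < f y \<or> f y < f x" by auto
    moreover have "x \<in> E" "y \<in> E" using xy assms(2) by auto
    ultimately show False using rnk_less_iff[OF assms, of x y] rnk_less_iff[OF assms, of y x] xy by auto
  qed
qed

lemma rnk_bij: assumes "korder R E f" "T \<subseteq> E" "finite T"
  shows "bij_betw (rnk R T) T {..<card T}"
proof -
  have "rnk R T ` T \<subseteq> {..<card T}" using rnk_lt_card[OF assms] by auto
  moreover have "card (rnk R T ` T) = card T" using rnk_inj[OF assms] card_image by blast
  ultimately have "rnk R T ` T = {..<card T}"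
    by (simp add: card_subset_eq)
  then show ?thesis using rnk_inj[OF assms] by (simp add: bij_betw_def)
qed

lemma nth_in_props: assumes "korder R E f" "T \<subseteq> E" "finite T" "k < card T"
  shows "nth_in R T k \<in> T \<and> rnk R T (nth_in R T k) = k"
proof -
  have "k \<in> rnk R T ` T" using bij_betw_imp_surj_on[OF rnk_bij[OF assms(1-3)]] assms(4) by simp
  then obtain x where x: "x \<in> T" "rnk R T x = k" by blast
  have u: "y = x" if "y \<in> T \<and> rnk R T y = k" for y using inj_onD[OF rnk_inj[OF assms(1-3)], of y x] x that
    by auto
  have "nth_in R T k = x" unfolding nth_in_def
  proof (rule the_equality)
    show "x \<in> T \<and> rnk R T x = k" using x by simp
  next
    fix y assume "y \<in> T \<and> rnk R T y = k" then show "y = x" by (rule u)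
  qed
  then show ?thesis using x by simp
qed

lemma nth_in_rnk: assumes "korder R E f" "T \<subseteq> E" "finite T" "x \<in> T"
  shows "nth_in R T (rnk R T x) = x"
proof -
  have k: "rnk R T x < card T" using rnk_lt_card[OF assms] .
  from nth_in_props[OF assms(1-3) k] show ?thesis using inj_onD[OF rnk_inj[OF assms(1-3)]] assms(4)
    by auto
qed

lemma nth_in_less_iff: assumes "korder R E f" "T \<subseteq> E" "finite T" "a < card T" "b < card T"
  shows "f (nth_in R T a) < f (nth_in R T b) \<longleftrightarrow> a < b"
proof -
  have "nth_in R T a \<in> T" "nth_in R T b \<in> T" "rnk R T (nth_in R T a) = a" "rnk R T (nth_in R T b) = b"
    using nth_in_props[OF assms(1-3) assms(4)] nth_in_props[OF assms(1-3) assms(5)] by auto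
  moreover have "nth_in R T b \<in> E" using calculation assms(2) by auto
  ultimately show ?thesis using rnk_less_iff[OF assms(1-3), of "nth_in R T a" "nth_in R T b"] by auto
qed

lemma nth_in_inj: assumes "korder R E f" "T \<subseteq> E" "finite T" "a < card T" "b < card T"
  shows "nth_in R T a = nth_in R T b \<longleftrightarrow> a = b"
  using nth_in_props[OF assms(1-3) assms(4)] nth_in_props[OF assms(1-3) assms(5)] by metis

lemma korder_lin: assumes "finite E" "R \<subseteq> E \<times> E" "strict_linear_order_on E R"
  shows "korder R E (rnk R E)"
proof -
  have tr: "trans R" and ir: "irrefl R" and to: "total_on E R"
    using assms(3) by (auto simp: strict_linear_order_on_def)
  have lt: "rnk R E x < rnk R E y" if xy: "(x,y) \<in> R" for x y
  proof -
    have s: "{z\<in>E. (z,x) \<in> R} \<subseteq> {z\<in>E. (z,y) \<in> R}"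
    proof
      fix z assume "z \<in> {z\<in>E. (z,x) \<in> R}"
      then have "z \<in> E" "(z,x) \<in> R" by auto
      then show "z \<in> {z\<in>E. (z,y) \<in> R}" using transD[OF tr _ xy] by blast
    qed
    have "x \<in> {z\<in>E. (z,y) \<in> R}" using xy assms(2) by auto
    moreover have "x \<notin> {z\<in>E. (z,x) \<in> R}" using ir by (simp add: irrefl_def)
    ultimately have "{z\<in>E. (z,x) \<in> R} \<subset> {z\<in>E. (z,y) \<in> R}" using s by blast
    then show ?thesis unfolding rnk_def using assms(1) by (simp add: psubset_card_mono)
  qed
  have tot: "x \<in> E \<Longrightarrow> y \<in> E \<Longrightarrow> x \<noteq> y \<Longrightarrow> (x,y) \<in> R \<or> (y,x) \<in> R" for x y
    using to unfolding total_on_def by blast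
  have "R = {(x,y). x \<in> E \<and> y \<in> E \<and> rnk R E x < rnk R E y}"
  proof (safe)
    fix x y assume "(x,y) \<in> R" then show "x \<in> E" "y \<in> E" "rnk R E x < rnk R E y"
      using assms(2) lt by auto
  next
    fix x y assume a: "x \<in> E" "y \<in> E" "rnk R E x < rnk R E y"
    then have "x \<noteq> y" by auto
    then have "(x,y) \<in> R \<or> (y,x) \<in> R" using tot a by blast
    moreover have "(y,x) \<notin> R" using lt[of y x] a(3) by auto
    ultimately show "(x,y) \<in> R" by blast
  qed
  moreover have "inj_on (rnk R E) E"
  proof (rule inj_onI)
    fix x y assume a: "x \<in> E" "y \<in> E" "rnk R E x = rnk R E y"
    show "x = y"
    proof (rule ccontr)
      assume "x \<noteq> y"
      then have "(x,y) \<in> R \<or> (y,x) \<in> R" using tot a by blast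
      then show False using lt[of x y] lt[of y x] a(3) by auto
    qed
  qed
  ultimately show ?thesis unfolding korder_def by simp
qed



lemma rnk_le_card: "finite T \<Longrightarrow> rnk R T x \<le> card T"
  unfolding rnk_def by (rule card_mono) auto

locale cset =
  fixes F :: "('v, 'a set) pgraph" and RF :: "('a set \<times> 'a set) set" and fF :: "'a set \<Rightarrow> 'k1::linorder"
    and S :: "('v, 'a set) pgraph" and RS :: "('a set \<times> 'a set) set" and fS :: "'a set \<Rightarrow> 'k2::linorder"
  assumes finF: "finite (edges F)" and finS: "finite (edges S)"
    and kF: "korder RF (edges F) fF" and kS: "korder RS (edges S) fS"
    and ncard: "card (outputs F) = card (inputs S)"
    and dnF: "disjoint_names F" and dnS: "disjoint_names S"
    and dFS: "\<Union>(edges F) \<inter> \<Union>(edges S) = {}"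
begin

abbreviation "nn \<equiv> card (outputs F)"
abbreviation "EF \<equiv> edges F"
abbreviation "ES \<equiv> edges S"
abbreviation "OF \<equiv> outputs F"
abbreviation "IS \<equiv> inputs S"
definition "oo k = nth_in RF OF k"
definition "ii k = nth_in RS IS k"
abbreviation "rF x \<equiv> rnk RF OF x"
abbreviation "rS x \<equiv> rnk RS IS x"
abbreviation "C \<equiv> comp_graph S RS F RF"
abbreviation "g k \<equiv> glue S RS F RF k"

lemma OF_sub: "OF \<subseteq> EF" unfolding outputs_def by auto
lemma IS_sub: "IS \<subseteq> ES" unfolding inputs_def by auto
lemma finOF: "finite OF" using finF OF_sub finite_subset by blast
lemma finIS: "finite IS" using finS IS_sub finite_subset by blast

lemma g_def: "g k = oo k \<union> ii k" unfolding glue_def oo_def ii_def by simp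

lemma oo_props: "k < nn \<Longrightarrow> oo k \<in> OF \<and> rF (oo k) = k"
  unfolding oo_def using nth_in_props[OF kF OF_sub finOF] by blast
lemma ii_props: "k < nn \<Longrightarrow> ii k \<in> IS \<and> rS (ii k) = k"
  unfolding ii_def using nth_in_props[OF kS IS_sub finIS] ncard by simp
lemma oo_rnk: "x \<in> OF \<Longrightarrow> oo (rF x) = x \<and> rF x < nn"
  unfolding oo_def using nth_in_rnk[OF kF OF_sub finOF] rnk_lt_card[OF kF OF_sub finOF] by blast
lemma ii_rnk: "x \<in> IS \<Longrightarrow> ii (rS x) = x \<and> rS x < nn"
  unfolding ii_def using nth_in_rnk[OF kS IS_sub finIS] rnk_lt_card[OF kS IS_sub finIS] ncard by simp
lemma oo_less: "a < nn \<Longrightarrow> b < nn \<Longrightarrow> fF (oo a) < fF (oo b) \<longleftrightarrow> a < b"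
  unfolding oo_def using nth_in_less_iff[OF kF OF_sub finOF] by blast
lemma ii_less: "a < nn \<Longrightarrow> b < nn \<Longrightarrow> fS (ii a) < fS (ii b) \<longleftrightarrow> a < b"
  unfolding ii_def using nth_in_less_iff[OF kS IS_sub finIS] ncard by simp
lemma oo_inj: "a < nn \<Longrightarrow> b < nn \<Longrightarrow> oo a = oo b \<longleftrightarrow> a = b"
  unfolding oo_def using nth_in_inj[OF kF OF_sub finOF] by blast
lemma ii_inj: "a < nn \<Longrightarrow> b < nn \<Longrightarrow> ii a = ii b \<longleftrightarrow> a = b"
  unfolding ii_def using nth_in_inj[OF kS IS_sub finIS] ncard by simp
lemma oo_E: "k < nn \<Longrightarrow> oo k \<in> EF" using oo_props OF_sub by blast
lemma ii_E: "k < nn \<Longrightarrow> ii k \<in> ES" using ii_props IS_sub by blast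

lemma rF_less: "t \<in> OF \<Longrightarrow> x \<in> EF \<Longrightarrow> rF t < rF x \<longleftrightarrow> fF t < fF x"
  using rnk_less_iff[OF kF OF_sub finOF] by blast
lemma rS_less: "t \<in> IS \<Longrightarrow> x \<in> ES \<Longrightarrow> rS t < rS x \<longleftrightarrow> fS t < fS x"
  using rnk_less_iff[OF kS IS_sub finIS] by blast
lemma rF_mono: "x \<in> EF \<Longrightarrow> y \<in> EF \<Longrightarrow> fF x \<le> fF y \<Longrightarrow> rF x \<le> rF y"
  using rnk_mono[OF kF OF_sub finOF] by blast
lemma rS_mono: "x \<in> ES \<Longrightarrow> y \<in> ES \<Longrightarrow> fS x \<le> fS y \<Longrightarrow> rS x \<le> rS y"
  using rnk_mono[OF kS IS_sub finIS] by blast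
lemma rS_le: "rS x \<le> nn" using rnk_le_card[OF finIS] ncard by simp
lemma fF_inj: "x \<in> EF \<Longrightarrow> y \<in> EF \<Longrightarrow> fF x = fF y \<longleftrightarrow> x = y" using korder_inj[OF kF] by blast
lemma fS_inj: "x \<in> ES \<Longrightarrow> y \<in> ES \<Longrightarrow> fS x = fS y \<longleftrightarrow> x = y" using korder_inj[OF kS] by blast
lemma RF_iff: "x \<in> EF \<Longrightarrow> y \<in> EF \<Longrightarrow> (x,y) \<in> RF \<longleftrightarrow> fF x < fF y" using korder_mem[OF kF] by blast
lemma RS_iff: "x \<in> ES \<Longrightarrow> y \<in> ES \<Longrightarrow> (x,y) \<in> RS \<longleftrightarrow> fS x < fS y" using korder_mem[OF kS] by blast

lemma neF: "x \<in> EF \<Longrightarrow> x \<noteq> {}" using dnF unfolding disjoint_names_def by blast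
lemma neS: "x \<in> ES \<Longrightarrow> x \<noteq> {}" using dnS unfolding disjoint_names_def by blast
lemma djF: "x \<in> EF \<Longrightarrow> y \<in> EF \<Longrightarrow> x \<noteq> y \<Longrightarrow> x \<inter> y = {}" using dnF unfolding disjoint_names_def by blast
lemma djS: "x \<in> ES \<Longrightarrow> y \<in> ES \<Longrightarrow> x \<noteq> y \<Longrightarrow> x \<inter> y = {}" using dnS unfolding disjoint_names_def by blast
lemma FS_int: "x \<in> EF \<Longrightarrow> y \<in> ES \<Longrightarrow> x \<inter> y = {}" using dFS by blast
lemma F_notS: "x \<in> EF \<Longrightarrow> x \<notin> ES" using FS_int neF by blast

lemma g_notF: assumes "k < nn" "x \<in> EF" shows "g k \<noteq> x"
proof
  assume a: "g k = x"
  have "ii k \<subseteq> x" using a g_def by auto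
  moreover have "ii k \<inter> x = {}" using FS_int[OF assms(2) ii_E[OF assms(1)]] by blast
  ultimately show False using neS[OF ii_E[OF assms(1)]] by blast
qed

lemma g_notS: assumes "k < nn" "x \<in> ES" shows "g k \<noteq> x"
proof
  assume a: "g k = x"
  have "oo k \<subseteq> x" using a g_def by auto
  moreover have "oo k \<inter> x = {}" using FS_int[OF oo_E[OF assms(1)] assms(2)] by blast
  ultimately show False using neF[OF oo_E[OF assms(1)]] by blast
qed

lemma g_inj: assumes "k < nn" "k' < nn" "g k = g k'" shows "k = k'"
proof -
  have "oo k \<subseteq> oo k' \<union> ii k'" using assms(3) g_def by auto
  moreover have "oo k \<inter> ii k' = {}" using FS_int[OF oo_E[OF assms(1)] ii_E[OF assms(2)]] .
  ultimately have "oo k \<subseteq> oo k'" by blast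
  then have "oo k \<inter> oo k' \<noteq> {}" using neF[OF oo_E[OF assms(1)]] by blast
  then have "oo k = oo k'" using djF[OF oo_E[OF assms(1)] oo_E[OF assms(2)]] by blast
  then show ?thesis using oo_inj assms(1,2) by blast
qed

lemma gidx: assumes "k < nn" shows "glue_idx S RS F RF (g k) = k"
  unfolding glue_idx_def
proof (rule the_equality)
  show "k < nn \<and> g k = g k" using assms by simp
next
  fix k' assume "k' < nn \<and> g k = g k'" then show "k' = k" using g_inj assms by metis
qed

lemma EC: "edges C = (EF - OF) \<union> (ES - IS) \<union> g ` {..<nn}"
  unfolding comp_graph_def by simp

lemma VC: "verts C = (verts F - sinks F) \<union> (verts S - sources S)"
  unfolding comp_graph_def by simp

lemma finC: "finite (edges C)" using EC finF finS by simp

lemma srcF: "x \<in> EF - OF \<Longrightarrow> src C x = src F x" unfolding comp_graph_def by simp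
lemma tgtF: "x \<in> EF - OF \<Longrightarrow> tgt C x = tgt F x" unfolding comp_graph_def by simp
lemma srcS: "x \<in> ES - IS \<Longrightarrow> src C x = src S x"
  unfolding comp_graph_def using F_notS by auto
lemma tgtS: "x \<in> ES - IS \<Longrightarrow> tgt C x = tgt S x"
  unfolding comp_graph_def using F_notS by auto
lemma srcG: assumes "k < nn" shows "src C (g k) = src F (oo k)"
proof -
  have "g k \<notin> EF" "g k \<notin> ES" using g_notF g_notS assms by blast+
  then show ?thesis unfolding comp_graph_def using gidx[OF assms] by (simp add: oo_def)
qed
lemma tgtG: assumes "k < nn" shows "tgt C (g k) = tgt S (ii k)"
proof -
  have "g k \<notin> EF" "g k \<notin> ES" using g_notF g_notS assms by blast+
  then show ?thesis unfolding comp_graph_def using gidx[OF assms] by (simp add: ii_def)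
qed

lemma EC_cases:
  assumes "x \<in> edges C"
  obtains (F) "x \<in> EF - OF" | (S) "x \<in> ES - IS" | (G) k where "k < nn" "x = g k"
  using assms EC by blast

lemma dn_C: "disjoint_names C"
  unfolding disjoint_names_def
proof (intro conjI ballI impI)
  fix e assume "e \<in> edges C" then show "e \<noteq> {}"
    by (cases rule: EC_cases) (use neF neS oo_E g_def in auto)
next
  fix e e' assume e: "e \<in> edges C" and e': "e' \<in> edges C" and ne: "e \<noteq> e'"
  show "e \<inter> e' = {}"
    using e
  proof (cases rule: EC_cases)
    case F
    from e' show ?thesis
    proof (cases rule: EC_cases)
      case F then show ?thesis using \<open>e \<in> EF - OF\<close> djF ne by blast
    next
      case S then show ?thesis using \<open>e \<in> EF - OF\<close> FS_int by blast
    next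
      case (G k)
      have "e \<noteq> oo k" using F oo_props[OF G(1)] by blast
      then have "e \<inter> oo k = {}" "e \<inter> ii k = {}" using F djF[OF _ oo_E[OF G(1)]] FS_int[OF _ ii_E[OF G(1)]] by auto
      then show ?thesis using G g_def by (simp add: Int_Un_distrib)
    qed
  next
    case S
    from e' show ?thesis
    proof (cases rule: EC_cases)
      case F then show ?thesis using \<open>e \<in> ES - IS\<close> FS_int by blast
    next
      case S then show ?thesis using \<open>e \<in> ES - IS\<close> djS ne by blast
    next
      case (G k)
      have "e \<noteq> ii k" using S ii_props[OF G(1)] by blast
      then have "e \<inter> ii k = {}" "oo k \<inter> e = {}" using S djS[OF _ ii_E[OF G(1)]] FS_int[OF oo_E[OF G(1)]] by auto
      then show ?thesis using G g_def by (auto simp add: Int_Un_distrib)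
    qed
  next
    case (G k)
    note Gk = G
    from e' show ?thesis
    proof (cases rule: EC_cases)
      case F
      have "e' \<noteq> oo k" using F oo_props[OF Gk(1)] by blast
      then have "e' \<inter> oo k = {}" "e' \<inter> ii k = {}" using F djF[OF _ oo_E[OF Gk(1)]] FS_int[OF _ ii_E[OF Gk(1)]] by auto
      then show ?thesis using Gk g_def by (auto simp add: Int_Un_distrib)
    next
      case S
      have "e' \<noteq> ii k" using S ii_props[OF Gk(1)] by blast
      then have "e' \<inter> ii k = {}" "oo k \<inter> e' = {}" using S djS[OF _ ii_E[OF Gk(1)]] FS_int[OF oo_E[OF Gk(1)]] by auto
      then show ?thesis using Gk g_def by (auto simp add: Int_Un_distrib)
    next
      case (G k')
      then have "k \<noteq> k'" using Gk ne by blast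
      then have "oo k \<noteq> oo k'" "ii k \<noteq> ii k'" using oo_inj ii_inj Gk(1) G(1) by blast+
      then have "oo k \<inter> oo k' = {}" "ii k \<inter> ii k' = {}" 
        using djF[OF oo_E[OF Gk(1)] oo_E[OF G(1)]] djS[OF ii_E[OF Gk(1)] ii_E[OF G(1)]] by blast+
      moreover have "oo k \<inter> ii k' = {}" "ii k \<inter> oo k' = {}"
        using FS_int[OF oo_E[OF Gk(1)] ii_E[OF G(1)]] FS_int[OF oo_E[OF G(1)] ii_E[OF Gk(1)]] by blast+
      ultimately show ?thesis using Gk G g_def by (auto simp add: Int_Un_distrib)
    qed
  qed
qed

lemma UC: "\<Union>(edges C) \<subseteq> \<Union>EF \<union> \<Union>ES"
proof
  fix a assume "a \<in> \<Union>(edges C)"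
  then obtain e where e: "e \<in> edges C" "a \<in> e" by blast
  from e(1) show "a \<in> \<Union>EF \<union> \<Union>ES"
    by (cases rule: EC_cases) (use e(2) oo_E ii_E g_def in auto)
qed

end


lemma lex3: "((a::'a::linorder, t::'b::linorder, c::'c::linorder) < (a', t', c')) \<longleftrightarrow> a < a' \<or> a = a' \<and> (t < t' \<or> t = t' \<and> c < c')"
  by (simp add: less_prod_def')

context cset begin

abbreviation "CO \<equiv> comp_order S RS F RF"
abbreviation "bk \<equiv> comp_block S RS F RF"

lemma CO_iff: "(x,y) \<in> CO \<longleftrightarrow> x \<in> edges C \<and> y \<in> edges C \<and>
   (bk x < bk y \<or> (bk x = bk y \<and> ((x \<in> EF - OF \<and> y \<in> EF - OF \<and> (x, y) \<in> RF) \<or>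
             (x \<in> ES - IS \<and> y \<in> ES - IS \<and> (x, y) \<in> RS))))"
  unfolding comp_order_def Let_def by simp

lemma bkF: "x \<in> EF - OF \<Longrightarrow> bk x = 3 * (rF x + 1)"
  unfolding comp_block_def by simp
lemma bkS: "x \<in> ES - IS \<Longrightarrow> bk x = 3 * rS x + 2"
  unfolding comp_block_def using F_notS by auto
lemma bkG: "k < nn \<Longrightarrow> bk (g k) = 3 * (k + 1) + 1"
  unfolding comp_block_def using g_notF g_notS gidx by auto

lemma inC_F: "x \<in> EF - OF \<Longrightarrow> x \<in> edges C" using EC by blast
lemma inC_S: "x \<in> ES - IS \<Longrightarrow> x \<in> edges C" using EC by blast
lemma inC_G: "k < nn \<Longrightarrow> g k \<in> edges C" using EC by blast

lemma notS_of_F: "x \<in> EF - OF \<Longrightarrow> x \<notin> ES - IS" using F_notS by blast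
lemma notFS_G: "k < nn \<Longrightarrow> g k \<notin> EF - OF \<and> g k \<notin> ES - IS" using g_notF g_notS by blast

lemma CO_FF: "x \<in> EF - OF \<Longrightarrow> y \<in> EF - OF \<Longrightarrow> (x,y) \<in> CO \<longleftrightarrow> rF x < rF y \<or> rF x = rF y \<and> fF x < fF y"
  using CO_iff[of x y] bkF[of x] bkF[of y] inC_F[of x] inC_F[of y] notS_of_F[of x] RF_iff[of x y] by auto
lemma CO_FS: "x \<in> EF - OF \<Longrightarrow> y \<in> ES - IS \<Longrightarrow> (x,y) \<in> CO \<longleftrightarrow> rF x < rS y"
  using CO_iff[of x y] bkF[of x] bkS[of y] inC_F[of x] inC_S[of y] by auto
lemma CO_FG: "x \<in> EF - OF \<Longrightarrow> k < nn \<Longrightarrow> (x,g k) \<in> CO \<longleftrightarrow> rF x \<le> k"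
  using CO_iff[of x "g k"] bkF[of x] bkG[of k] inC_F[of x] inC_G[of k] by auto
lemma CO_SF: "x \<in> ES - IS \<Longrightarrow> y \<in> EF - OF \<Longrightarrow> (x,y) \<in> CO \<longleftrightarrow> rS x \<le> rF y"
  using CO_iff[of x y] bkS[of x] bkF[of y] inC_S[of x] inC_F[of y] by auto
lemma CO_SS: "x \<in> ES - IS \<Longrightarrow> y \<in> ES - IS \<Longrightarrow> (x,y) \<in> CO \<longleftrightarrow> rS x < rS y \<or> rS x = rS y \<and> fS x < fS y"
  using CO_iff[of x y] bkS[of x] bkS[of y] inC_S[of x] inC_S[of y] notS_of_F RS_iff[of x y] by auto
lemma CO_SG: "x \<in> ES - IS \<Longrightarrow> k < nn \<Longrightarrow> (x,g k) \<in> CO \<longleftrightarrow> rS x \<le> k"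
  using CO_iff[of x "g k"] bkS[of x] bkG[of k] inC_S[of x] inC_G[of k] by auto
lemma CO_GF: "k < nn \<Longrightarrow> y \<in> EF - OF \<Longrightarrow> (g k, y) \<in> CO \<longleftrightarrow> k < rF y"
  using CO_iff[of "g k" y] bkG[of k] bkF[of y] inC_F[of y] inC_G[of k] by auto
lemma CO_GS: "k < nn \<Longrightarrow> y \<in> ES - IS \<Longrightarrow> (g k, y) \<in> CO \<longleftrightarrow> k < rS y"
  using CO_iff[of "g k" y] bkG[of k] bkS[of y] inC_S[of y] inC_G[of k] by auto
lemma CO_GG: "k < nn \<Longrightarrow> k' < nn \<Longrightarrow> (g k, g k') \<in> CO \<longleftrightarrow> k < k'"
  using CO_iff[of "g k" "g k'"] bkG[of k] bkG[of k'] inC_G[of k] inC_G[of k'] notFS_G[of k] by auto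

end


context cset begin

definition "anc2 x = (if x \<in> EF - OF then ii (rF x) else if x \<in> ES - IS then x
                      else ii (glue_idx S RS F RF x))"
definition "key2 x = (fS (anc2 x), (if x \<in> EF - OF then 0 else 1::nat), (if x \<in> EF - OF then Some (fF x) else None))"

lemma anc2F: "x \<in> EF - OF \<Longrightarrow> anc2 x = ii (rF x)" unfolding anc2_def by simp
lemma anc2S: "x \<in> ES - IS \<Longrightarrow> anc2 x = x" unfolding anc2_def using notS_of_F by auto
lemma anc2G: "k < nn \<Longrightarrow> anc2 (g k) = ii k" unfolding anc2_def using notFS_G gidx by auto
lemma key2F: "x \<in> EF - OF \<Longrightarrow> key2 x = (fS (ii (rF x)), 0, Some (fF x))" unfolding key2_def using anc2F by simp
lemma key2S: "x \<in> ES - IS \<Longrightarrow> key2 x = (fS x, 1, None)" unfolding key2_def using anc2S notS_of_F by auto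
lemma key2G: "k < nn \<Longrightarrow> key2 (g k) = (fS (ii k), 1, None)" unfolding key2_def using anc2G notFS_G by auto

lemma ii_eq: "a < nn \<Longrightarrow> b < nn \<Longrightarrow> fS (ii a) = fS (ii b) \<longleftrightarrow> a = b"
  using fS_inj[OF ii_E ii_E] ii_inj by blast
lemma ii_x_less: "x \<in> ES - IS \<Longrightarrow> a < nn \<Longrightarrow> fS (ii a) < fS x \<longleftrightarrow> a < rS x"
  using rS_less[of "ii a" x] ii_props[of a] by auto
lemma ii_x_ne: "x \<in> ES - IS \<Longrightarrow> a < nn \<Longrightarrow> fS (ii a) \<noteq> fS x"
  using fS_inj[of "ii a" x] ii_props[of a] ii_E[of a] by auto
lemma x_ii_less: "x \<in> ES - IS \<Longrightarrow> a < nn \<Longrightarrow> fS x < fS (ii a) \<longleftrightarrow> rS x \<le> a"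
  using ii_x_less[of x a] ii_x_ne[of x a] by auto

lemma SS_equiv: assumes "x \<in> ES - IS" "y \<in> ES - IS"
  shows "fS x < fS y \<longleftrightarrow> rS x < rS y \<or> rS x = rS y \<and> fS x < fS y"
proof -
  have "rS x < rS y \<Longrightarrow> fS x < fS y" using rS_mono[of y x] assms by force
  moreover have "fS x < fS y \<Longrightarrow> rS x \<le> rS y" using rS_mono[of x y] assms by force
  ultimately show ?thesis by auto
qed

lemma FF_equiv: assumes "x \<in> EF - OF" "y \<in> EF - OF"
  shows "fF x < fF y \<longleftrightarrow> rF x < rF y \<or> rF x = rF y \<and> fF x < fF y"
proof -
  have "rF x < rF y \<Longrightarrow> fF x < fF y" using rF_mono[of y x] assms by force
  moreover have "fF x < fF y \<Longrightarrow> rF x \<le> rF y" using rF_mono[of x y] assms by force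
  ultimately show ?thesis by auto
qed

lemma key2_lt:
  assumes H: "\<forall>z \<in> EF - OF. rF z < nn" and x: "x \<in> edges C" and y: "y \<in> edges C"
  shows "(x,y) \<in> CO \<longleftrightarrow> key2 x < key2 y"
  using x
proof (cases rule: EC_cases)
  case xF: F
  have rx: "rF x < nn" using H xF by blast
  from y show ?thesis
  proof (cases rule: EC_cases)
    case F
    have ry: "rF y < nn" using H F by blast
    show ?thesis using CO_FF[OF xF F] key2F[OF xF] key2F[OF F] ii_less[OF rx ry] ii_eq[OF rx ry]
      by (simp del: less_prod_simp add: lex3)
  next
    case S
    show ?thesis using CO_FS[OF xF S] key2F[OF xF] key2S[OF S] ii_x_less[OF S rx] ii_x_ne[OF S rx]
      by (simp del: less_prod_simp add: lex3)
  next
    case (G k)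
    show ?thesis using CO_FG[OF xF G(1)] key2F[OF xF] key2G[OF G(1)] ii_less[OF rx G(1)] ii_eq[OF rx G(1)] G(2)
      by (auto simp del: less_prod_simp simp add: lex3)
  qed
next
  case xS: S
  from y show ?thesis
  proof (cases rule: EC_cases)
    case F
    have ry: "rF y < nn" using H F by blast
    show ?thesis using CO_SF[OF xS F] key2S[OF xS] key2F[OF F] x_ii_less[OF xS ry] ii_x_ne[OF xS ry]
      by (auto simp del: less_prod_simp simp add: lex3)
  next
    case S
    have "fS x = fS y \<Longrightarrow> x = y" using fS_inj xS S by blast
    then show ?thesis using CO_SS[OF xS S] key2S[OF xS] key2S[OF S] SS_equiv[OF xS S]
      by (auto simp del: less_prod_simp simp add: lex3)
  next
    case (G k)
    show ?thesis using CO_SG[OF xS G(1)] key2S[OF xS] key2G[OF G(1)] x_ii_less[OF xS G(1)] ii_x_ne[OF xS G(1)] G(2)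
      by (auto simp del: less_prod_simp simp add: lex3)
  qed
next
  case xG: (G k)
  from y show ?thesis
  proof (cases rule: EC_cases)
    case F
    have ry: "rF y < nn" using H F by blast
    show ?thesis using CO_GF[OF xG(1) F] key2G[OF xG(1)] key2F[OF F] ii_less[OF xG(1) ry] ii_eq[OF xG(1) ry] xG(2)
      by (auto simp del: less_prod_simp simp add: lex3)
  next
    case S
    show ?thesis using CO_GS[OF xG(1) S] key2G[OF xG(1)] key2S[OF S] ii_x_less[OF S xG(1)] ii_x_ne[OF S xG(1)] xG(2)
      by (auto simp del: less_prod_simp simp add: lex3)
  next
    case (G k')
    show ?thesis using CO_GG[OF xG(1) G(1)] key2G[OF xG(1)] key2G[OF G(1)] ii_less[OF xG(1) G(1)] ii_eq[OF xG(1) G(1)] xG(2) G(2)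
      by (auto simp del: less_prod_simp simp add: lex3)
  qed
qed

lemma key2_inj: "inj_on key2 (edges C)"
proof (rule inj_onI)
  fix x y assume x: "x \<in> edges C" and y: "y \<in> edges C" and e: "key2 x = key2 y"
  have e3: "fS (anc2 x) = fS (anc2 y) \<and> (if x \<in> EF - OF then 0 else 1::nat) = (if y \<in> EF - OF then 0 else 1) \<and> (if x \<in> EF - OF then Some (fF x) else None) = (if y \<in> EF - OF then Some (fF y) else None)"
    using e unfolding key2_def by (simp only: prod.inject)
  have tg: "(if x \<in> EF - OF then 0 else 1::nat) = (if y \<in> EF - OF then 0 else 1)" using e3 by blast
  have tx: "(if x \<in> EF - OF then 0 else 1::nat) = 0 \<longleftrightarrow> x \<in> EF - OF" by (cases "x \<in> EF - OF") simp_all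
  have ty: "(if y \<in> EF - OF then 0 else 1::nat) = 0 \<longleftrightarrow> y \<in> EF - OF" by (cases "y \<in> EF - OF") simp_all
  have t: "(x \<in> EF - OF) = (y \<in> EF - OF)" using tg tx ty by metis
  have a: "fS (anc2 x) = fS (anc2 y)" using e3 by blast
  have f: "x \<in> EF - OF \<Longrightarrow> y \<in> EF - OF \<Longrightarrow> fF x = fF y" using e3 by simp
  from x show "x = y"
  proof (cases rule: EC_cases)
    case xF: F
    then have "y \<in> EF - OF" using t by blast
    then show ?thesis using f fF_inj[of x y] xF by blast
  next
    case xS: S
    from y show ?thesis
    proof (cases rule: EC_cases)
      case F then show ?thesis using t xS notS_of_F by blast
    next
      case S
      then have "fS x = fS y" using a anc2S[OF xS] anc2S[OF S] by simp
      then show ?thesis using fS_inj[of x y] xS S by blast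
    next
      case (G k)
      then have "fS x = fS (ii k)" using a anc2S[OF xS] anc2G[OF G(1)] by simp
      then show ?thesis using ii_x_ne[OF xS G(1)] by simp
    qed
  next
    case xG: (G k)
    from y show ?thesis
    proof (cases rule: EC_cases)
      case F then show ?thesis using t xG notFS_G by blast
    next
      case S
      then have "fS y = fS (ii k)" using a anc2S[OF S] anc2G[OF xG(1)] xG(2) by simp
      then show ?thesis using ii_x_ne[OF S xG(1)] by simp
    next
      case (G k')
      then have "fS (ii k) = fS (ii k')" using a anc2G[OF xG(1)] anc2G[OF G(1)] xG(2) by simp
      then have "k = k'" using ii_eq[OF xG(1) G(1)] by blast
      then show ?thesis using xG G by simp
    qed
  qed
qed

lemma key2_korder: assumes H: "\<forall>z \<in> EF - OF. rF z < nn"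
  shows "korder CO (edges C) key2"
  unfolding korder_def
proof
  show "CO = {(x,y). x \<in> edges C \<and> y \<in> edges C \<and> key2 x < key2 y}"
  proof (rule set_eqI)
    fix p :: "'a set \<times> 'a set"
    show "p \<in> CO \<longleftrightarrow> p \<in> {(x,y). x \<in> edges C \<and> y \<in> edges C \<and> key2 x < key2 y}"
    proof (cases p)
      case (Pair x y)
      show ?thesis unfolding Pair using key2_lt[OF H, of x y] CO_iff[of x y] by blast
    qed
  qed
  show "inj_on key2 (edges C)" by (rule key2_inj)
qed

end


context cset begin

definition "anc1 x = (if x \<in> EF - OF then x else if x \<in> ES - IS then oo (rS x - 1)
                      else oo (glue_idx S RS F RF x))"
definition "key1 x = (fF (anc1 x), (if x \<in> ES - IS then 1 else 0::nat), (if x \<in> ES - IS then Some (fS x) else None))"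

lemma anc1F: "x \<in> EF - OF \<Longrightarrow> anc1 x = x" unfolding anc1_def by simp
lemma anc1S: "x \<in> ES - IS \<Longrightarrow> anc1 x = oo (rS x - 1)" unfolding anc1_def using notS_of_F by auto
lemma anc1G: "k < nn \<Longrightarrow> anc1 (g k) = oo k" unfolding anc1_def using notFS_G gidx by auto
lemma key1F: "x \<in> EF - OF \<Longrightarrow> key1 x = (fF x, 0, None)" unfolding key1_def using anc1F notS_of_F by simp
lemma key1S: "x \<in> ES - IS \<Longrightarrow> key1 x = (fF (oo (rS x - 1)), 1, Some (fS x))" unfolding key1_def using anc1S by simp
lemma key1G: "k < nn \<Longrightarrow> key1 (g k) = (fF (oo k), 0, None)" unfolding key1_def using anc1G notFS_G by auto

lemma oo_eq: "a < nn \<Longrightarrow> b < nn \<Longrightarrow> fF (oo a) = fF (oo b) \<longleftrightarrow> a = b"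
  using fF_inj[OF oo_E oo_E] oo_inj by blast
lemma oo_x_less: "x \<in> EF - OF \<Longrightarrow> a < nn \<Longrightarrow> fF (oo a) < fF x \<longleftrightarrow> a < rF x"
  using rF_less[of "oo a" x] oo_props[of a] by auto
lemma oo_x_ne: "x \<in> EF - OF \<Longrightarrow> a < nn \<Longrightarrow> fF (oo a) \<noteq> fF x"
  using fF_inj[of "oo a" x] oo_props[of a] oo_E[of a] by auto
lemma x_oo_less: "x \<in> EF - OF \<Longrightarrow> a < nn \<Longrightarrow> fF x < fF (oo a) \<longleftrightarrow> rF x \<le> a"
  using oo_x_less[of x a] oo_x_ne[of x a] by auto

lemma key1_lt:
  assumes H: "\<forall>z \<in> ES - IS. 1 \<le> rS z" and x: "x \<in> edges C" and y: "y \<in> edges C"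
  shows "(x,y) \<in> CO \<longleftrightarrow> key1 x < key1 y"
  using x
proof (cases rule: EC_cases)
  case xF: F
  from y show ?thesis
  proof (cases rule: EC_cases)
    case F
    have "fF x = fF y \<Longrightarrow> x = y" using fF_inj xF F by blast
    then show ?thesis using CO_FF[OF xF F] key1F[OF xF] key1F[OF F] FF_equiv[OF xF F]
      by (auto simp del: less_prod_simp simp add: lex3)
  next
    case S
    have ry1: "1 \<le> rS y" using H S by blast
    have ry: "1 \<le> rS y" "rS y - 1 < nn" using ry1 rS_le[of y] by linarith+
    show ?thesis using CO_FS[OF xF S] key1F[OF xF] key1S[OF S] x_oo_less[OF xF ry(2)] oo_x_ne[OF xF ry(2)] ry(1)
      by (auto simp del: less_prod_simp simp add: lex3)
  next
    case (G k)
    show ?thesis using CO_FG[OF xF G(1)] key1F[OF xF] key1G[OF G(1)] x_oo_less[OF xF G(1)] oo_x_ne[OF xF G(1)] G(2)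
      by (auto simp del: less_prod_simp simp add: lex3)
  qed
next
  case xS: S
  have rx1: "1 \<le> rS x" using H xS by blast
    have rx: "1 \<le> rS x" "rS x - 1 < nn" using rx1 rS_le[of x] by linarith+
  from y show ?thesis
  proof (cases rule: EC_cases)
    case F
    show ?thesis using CO_SF[OF xS F] key1S[OF xS] key1F[OF F] oo_x_less[OF F rx(2)] oo_x_ne[OF F rx(2)] rx(1)
      by (auto simp del: less_prod_simp simp add: lex3)
  next
    case S
    have ry1: "1 \<le> rS y" using H S by blast
    have ry: "1 \<le> rS y" "rS y - 1 < nn" using ry1 rS_le[of y] by linarith+
    show ?thesis using CO_SS[OF xS S] key1S[OF xS] key1S[OF S] oo_less[OF rx(2) ry(2)] oo_eq[OF rx(2) ry(2)] rx(1) ry(1)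
      by (auto simp del: less_prod_simp simp add: lex3)
  next
    case (G k)
    show ?thesis using CO_SG[OF xS G(1)] key1S[OF xS] key1G[OF G(1)] oo_less[OF rx(2) G(1)] oo_eq[OF rx(2) G(1)] rx(1) G(2)
      by (auto simp del: less_prod_simp simp add: lex3)
  qed
next
  case xG: (G k)
  from y show ?thesis
  proof (cases rule: EC_cases)
    case F
    show ?thesis using CO_GF[OF xG(1) F] key1G[OF xG(1)] key1F[OF F] oo_x_less[OF F xG(1)] oo_x_ne[OF F xG(1)] xG(2)
      by (auto simp del: less_prod_simp simp add: lex3)
  next
    case S
    have ry1: "1 \<le> rS y" using H S by blast
    have ry: "1 \<le> rS y" "rS y - 1 < nn" using ry1 rS_le[of y] by linarith+
    show ?thesis using CO_GS[OF xG(1) S] key1G[OF xG(1)] key1S[OF S] oo_less[OF xG(1) ry(2)] oo_eq[OF xG(1) ry(2)] ry(1) xG(2)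
      by (auto simp del: less_prod_simp simp add: lex3)
  next
    case (G k')
    show ?thesis using CO_GG[OF xG(1) G(1)] key1G[OF xG(1)] key1G[OF G(1)] oo_less[OF xG(1) G(1)] oo_eq[OF xG(1) G(1)] xG(2) G(2)
      by (auto simp del: less_prod_simp simp add: lex3)
  qed
qed

lemma key1_inj: "inj_on key1 (edges C)"
proof (rule inj_onI)
  fix x y assume x: "x \<in> edges C" and y: "y \<in> edges C" and e: "key1 x = key1 y"
  have e3: "fF (anc1 x) = fF (anc1 y) \<and> (if x \<in> ES - IS then 1 else 0::nat) = (if y \<in> ES - IS then 1 else 0) \<and> (if x \<in> ES - IS then Some (fS x) else None) = (if y \<in> ES - IS then Some (fS y) else None)"
    using e unfolding key1_def by (simp only: prod.inject)
  have tg: "(if x \<in> ES - IS then 1 else 0::nat) = (if y \<in> ES - IS then 1 else 0)" using e3 by blast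
  have tx: "(if x \<in> ES - IS then 1 else 0::nat) = 0 \<longleftrightarrow> x \<notin> ES - IS" by (cases "x \<in> ES - IS") simp_all
  have ty: "(if y \<in> ES - IS then 1 else 0::nat) = 0 \<longleftrightarrow> y \<notin> ES - IS" by (cases "y \<in> ES - IS") simp_all
  have t: "(x \<in> ES - IS) = (y \<in> ES - IS)" using tg tx ty by metis
  have a: "fF (anc1 x) = fF (anc1 y)" using e3 by blast
  have f: "x \<in> ES - IS \<Longrightarrow> y \<in> ES - IS \<Longrightarrow> fS x = fS y" using e3 by simp
  from x show "x = y"
  proof (cases rule: EC_cases)
    case xS: S
    then have "y \<in> ES - IS" using t by blast
    then show ?thesis using f fS_inj[of x y] xS by blast
  next
    case xF: F
    from y show ?thesis
    proof (cases rule: EC_cases)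
      case S then show ?thesis using t xF notS_of_F by blast
    next
      case F
      then have "fF x = fF y" using a anc1F[OF xF] anc1F[OF F] by simp
      then show ?thesis using fF_inj[of x y] xF F by blast
    next
      case (G k)
      then have "fF (oo k) = fF x" using a anc1F[OF xF] anc1G[OF G(1)] by simp
      then show ?thesis using oo_x_ne[OF xF G(1)] by simp
    qed
  next
    case xG: (G k)
    from y show ?thesis
    proof (cases rule: EC_cases)
      case S then show ?thesis using t xG notFS_G by blast
    next
      case F
      then have "fF (oo k) = fF y" using a anc1F[OF F] anc1G[OF xG(1)] xG(2) by simp
      then show ?thesis using oo_x_ne[OF F xG(1)] by simp
    next
      case (G k')
      then have "fF (oo k) = fF (oo k')" using a anc1G[OF xG(1)] anc1G[OF G(1)] xG(2) by simp
      then have "k = k'" using oo_eq[OF xG(1) G(1)] by blast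
      then show ?thesis using xG G by simp
    qed
  qed
qed

lemma key1_korder: assumes H: "\<forall>z \<in> ES - IS. 1 \<le> rS z"
  shows "korder CO (edges C) key1"
  unfolding korder_def
proof
  show "CO = {(x,y). x \<in> edges C \<and> y \<in> edges C \<and> key1 x < key1 y}"
  proof (rule set_eqI)
    fix p :: "'a set \<times> 'a set"
    show "p \<in> CO \<longleftrightarrow> p \<in> {(x,y). x \<in> edges C \<and> y \<in> edges C \<and> key1 x < key1 y}"
    proof (cases p)
      case (Pair x y)
      show ?thesis unfolding Pair using key1_lt[OF H, of x y] CO_iff[of x y] by blast
    qed
  qed
  show "inj_on key1 (edges C)" by (rule key1_inj)
qed

end


lemma prog_fin: "progressive G \<Longrightarrow> finite (edges G)" unfolding progressive_def by blast
lemma prog_finV: "progressive G \<Longrightarrow> finite (verts G)" unfolding progressive_def by blast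
lemma prog_src: "progressive G \<Longrightarrow> e \<in> edges G \<Longrightarrow> src G e \<in> verts G" unfolding progressive_def by blast
lemma prog_tgt: "progressive G \<Longrightarrow> e \<in> edges G \<Longrightarrow> tgt G e \<in> verts G" unfolding progressive_def by blast
lemma prog_srcdeg: "progressive G \<Longrightarrow> v \<in> sources G \<Longrightarrow> deg G v = 1" unfolding progressive_def by blast
lemma prog_sinkdeg: "progressive G \<Longrightarrow> v \<in> sinks G \<Longrightarrow> deg G v = 1" unfolding progressive_def by blast

lemma indeg_pos: "finite (edges G) \<Longrightarrow> e \<in> edges G \<Longrightarrow> tgt G e = v \<Longrightarrow> indeg G v \<noteq> 0"
  unfolding indeg_def by (subst card_0_eq) auto
lemma outdeg_pos: "finite (edges G) \<Longrightarrow> e \<in> edges G \<Longrightarrow> src G e = v \<Longrightarrow> outdeg G v \<noteq> 0"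
  unfolding outdeg_def by (subst card_0_eq) auto
lemma indeg_zero: "finite (edges G) \<Longrightarrow> indeg G v = 0 \<longleftrightarrow> (\<forall>e \<in> edges G. tgt G e \<noteq> v)"
  unfolding indeg_def by (subst card_0_eq) auto

lemma out_tgt_sink: assumes "progressive G" "e \<in> outputs G" shows "outdeg G (tgt G e) = 0"
proof -
  have e: "e \<in> edges G" "tgt G e \<in> boundary G" using assms(2) unfolding outputs_def by auto
  then have "deg G (tgt G e) = 1" unfolding boundary_def by auto
  moreover have "indeg G (tgt G e) \<noteq> 0" using indeg_pos[OF prog_fin[OF assms(1)] e(1)] by blast
  ultimately show ?thesis unfolding deg_def by linarith
qed

lemma in_src_source: assumes "progressive G" "e \<in> inputs G" shows "indeg G (src G e) = 0"
proof -
  have e: "e \<in> edges G" "src G e \<in> boundary G" using assms(2) unfolding inputs_def by auto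
  then have "deg G (src G e) = 1" unfolding boundary_def by auto
  moreover have "outdeg G (src G e) \<noteq> 0" using outdeg_pos[OF prog_fin[OF assms(1)] e(1)] by blast
  ultimately show ?thesis unfolding deg_def by linarith
qed

lemma source_input: assumes "progressive G" "e \<in> edges G" "src G e \<in> sources G" shows "e \<in> inputs G"
  using prog_srcdeg[OF assms(1,3)] assms(2,3) unfolding inputs_def boundary_def sources_def by auto

lemma sink_output: assumes "progressive G" "e \<in> edges G" "tgt G e \<in> sinks G" shows "e \<in> outputs G"
  using prog_sinkdeg[OF assms(1,3)] assms(2,3) unfolding outputs_def boundary_def sinks_def by auto

locale cprog = cset +
  assumes progF: "progressive F" and progS: "progressive S"
    and dV: "verts F \<inter> verts S = {}"
begin

abbreviation "VF \<equiv> verts F"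
abbreviation "VS \<equiv> verts S"

definition "phi e = (if e \<in> OF then g (rF e) else e)"
definition "psi e = (if e \<in> IS then g (rS e) else e)"

lemma phi_inj: "inj_on phi EF"
proof (rule inj_onI)
  fix e e' assume e: "e \<in> EF" "e' \<in> EF" "phi e = phi e'"
  show "e = e'"
  proof (cases "e \<in> OF"; cases "e' \<in> OF")
    assume a: "e \<in> OF" "e' \<in> OF"
    then have "g (rF e) = g (rF e')" using e(3) unfolding phi_def by simp
    then have "rF e = rF e'" using g_inj oo_rnk a by blast
    then show ?thesis using oo_rnk a by metis
  next
    assume a: "e \<in> OF" "e' \<notin> OF"
    then have "g (rF e) = e'" using e(3) unfolding phi_def by simp
    then show ?thesis using g_notF oo_rnk a e(2) by blast
  next
    assume a: "e \<notin> OF" "e' \<in> OF"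
    then have "g (rF e') = e" using e(3) unfolding phi_def by simp
    then show ?thesis using g_notF oo_rnk a e(1) by blast
  next
    assume a: "e \<notin> OF" "e' \<notin> OF"
    then show ?thesis using e(3) unfolding phi_def by simp
  qed
qed

lemma psi_inj: "inj_on psi ES"
proof (rule inj_onI)
  fix e e' assume e: "e \<in> ES" "e' \<in> ES" "psi e = psi e'"
  show "e = e'"
  proof (cases "e \<in> IS"; cases "e' \<in> IS")
    assume a: "e \<in> IS" "e' \<in> IS"
    then have "g (rS e) = g (rS e')" using e(3) unfolding psi_def by simp
    then have "rS e = rS e'" using g_inj ii_rnk a by blast
    then show ?thesis using ii_rnk a by metis
  next
    assume a: "e \<in> IS" "e' \<notin> IS"
    then have "g (rS e) = e'" using e(3) unfolding psi_def by simp
    then show ?thesis using g_notS ii_rnk a e(2) by blast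
  next
    assume a: "e \<notin> IS" "e' \<in> IS"
    then have "g (rS e') = e" using e(3) unfolding psi_def by simp
    then show ?thesis using g_notS ii_rnk a e(1) by blast
  next
    assume a: "e \<notin> IS" "e' \<notin> IS"
    then show ?thesis using e(3) unfolding psi_def by simp
  qed
qed

lemma srcG_V: "k < nn \<Longrightarrow> src C (g k) \<in> VF" using srcG prog_src[OF progF oo_E] by simp
lemma tgtG_V: "k < nn \<Longrightarrow> tgt C (g k) \<in> VS" using tgtG prog_tgt[OF progS ii_E] by simp
lemma srcS_V: "x \<in> ES - IS \<Longrightarrow> src C x \<in> VS" using srcS prog_src[OF progS] by simp
lemma tgtS_V: "x \<in> ES - IS \<Longrightarrow> tgt C x \<in> VS" using tgtS prog_tgt[OF progS] by simp
lemma srcF_V: "x \<in> EF - OF \<Longrightarrow> src C x \<in> VF" using srcF prog_src[OF progF] by simp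
lemma tgtF_V: "x \<in> EF - OF \<Longrightarrow> tgt C x \<in> VF" using tgtF prog_tgt[OF progF] by simp

lemma notsinkF: "v \<in> VF - sinks F \<Longrightarrow> outdeg F v \<noteq> 0" unfolding sinks_def by auto
lemma notsourceS: "v \<in> VS - sources S \<Longrightarrow> indeg S v \<noteq> 0" unfolding sources_def by auto

lemma inSetF: assumes v: "v \<in> VF - sinks F"
  shows "{x \<in> edges C. tgt C x = v} = {e \<in> EF. tgt F e = v}"
proof (rule set_eqI, rule iffI)
  fix x assume "x \<in> {x \<in> edges C. tgt C x = v}"
  then have x: "x \<in> edges C" "tgt C x = v" by auto
  from x(1) show "x \<in> {e \<in> EF. tgt F e = v}"
  proof (cases rule: EC_cases)
    case F then show ?thesis using x(2) tgtF by auto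
  next
    case S then show ?thesis using x(2) tgtS_V dV v by blast
  next
    case (G k) then show ?thesis using x(2) tgtG_V dV v by blast
  qed
next
  fix x assume "x \<in> {e \<in> EF. tgt F e = v}"
  then have x: "x \<in> EF" "tgt F x = v" by auto
  have "x \<notin> OF"
  proof
    assume "x \<in> OF" then have "outdeg F (tgt F x) = 0" by (rule out_tgt_sink[OF progF])
    then show False using x notsinkF[OF v] by simp
  qed
  then show "x \<in> {x \<in> edges C. tgt C x = v}" using x EC tgtF by auto
qed

lemma outC_F: assumes v: "v \<in> VF - sinks F"
  shows "{x \<in> edges C. src C x = v} = phi ` {e \<in> EF. src F e = v}"
proof (rule set_eqI, rule iffI)
  fix x assume "x \<in> {x \<in> edges C. src C x = v}"
  then have x: "x \<in> edges C" "src C x = v" by auto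
  from x(1) show "x \<in> phi ` {e \<in> EF. src F e = v}"
  proof (cases rule: EC_cases)
    case F
    then have "phi x = x" unfolding phi_def by simp
    then show ?thesis using x(2) srcF F by force
  next
    case S then show ?thesis using x(2) srcS_V dV v by blast
  next
    case (G k)
    have "phi (oo k) = g k" unfolding phi_def using oo_props[OF G(1)] by simp
    moreover have "oo k \<in> {e \<in> EF. src F e = v}" using oo_E[OF G(1)] srcG[OF G(1)] x(2) G(2) by simp
    ultimately show ?thesis using G(2) by (metis image_eqI)
  qed
next
  fix x assume "x \<in> phi ` {e \<in> EF. src F e = v}"
  then obtain e where e: "e \<in> EF" "src F e = v" "x = phi e" by blast
  show "x \<in> {x \<in> edges C. src C x = v}"
  proof (cases "e \<in> OF")
    case True
    then have "x = g (rF e)" "rF e < nn" "oo (rF e) = e" using e(3) oo_rnk unfolding phi_def by auto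
    then show ?thesis using srcG[of "rF e"] inC_G[of "rF e"] e(2) by simp
  next
    case False
    then show ?thesis using e EC srcF unfolding phi_def by auto
  qed
qed

lemma outC_S: assumes v: "v \<in> VS - sources S"
  shows "{x \<in> edges C. src C x = v} = {e \<in> ES. src S e = v}"
proof (rule set_eqI, rule iffI)
  fix x assume "x \<in> {x \<in> edges C. src C x = v}"
  then have x: "x \<in> edges C" "src C x = v" by auto
  from x(1) show "x \<in> {e \<in> ES. src S e = v}"
  proof (cases rule: EC_cases)
    case F then show ?thesis using x(2) srcF_V dV v by blast
  next
    case S then show ?thesis using x(2) srcS by auto
  next
    case (G k) then show ?thesis using x(2) srcG_V dV v by blast
  qed
next
  fix x assume "x \<in> {e \<in> ES. src S e = v}"
  then have x: "x \<in> ES" "src S x = v" by auto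
  have "x \<notin> IS"
  proof
    assume "x \<in> IS" then have "indeg S (src S x) = 0" by (rule in_src_source[OF progS])
    then show False using x notsourceS[OF v] by simp
  qed
  then show "x \<in> {x \<in> edges C. src C x = v}" using x EC srcS by auto
qed

lemma inSetS: assumes v: "v \<in> VS - sources S"
  shows "{x \<in> edges C. tgt C x = v} = psi ` {e \<in> ES. tgt S e = v}"
proof (rule set_eqI, rule iffI)
  fix x assume "x \<in> {x \<in> edges C. tgt C x = v}"
  then have x: "x \<in> edges C" "tgt C x = v" by auto
  from x(1) show "x \<in> psi ` {e \<in> ES. tgt S e = v}"
  proof (cases rule: EC_cases)
    case F then show ?thesis using x(2) tgtF_V dV v by blast
  next
    case S
    then have "psi x = x" unfolding psi_def by simp
    then show ?thesis using x(2) tgtS S by force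
  next
    case (G k)
    have "psi (ii k) = g k" unfolding psi_def using ii_props[OF G(1)] by simp
    moreover have "ii k \<in> {e \<in> ES. tgt S e = v}" using ii_E[OF G(1)] tgtG[OF G(1)] x(2) G(2) by simp
    ultimately show ?thesis using G(2) by (metis image_eqI)
  qed
next
  fix x assume "x \<in> psi ` {e \<in> ES. tgt S e = v}"
  then obtain e where e: "e \<in> ES" "tgt S e = v" "x = psi e" by blast
  show "x \<in> {x \<in> edges C. tgt C x = v}"
  proof (cases "e \<in> IS")
    case True
    then have "x = g (rS e)" "rS e < nn" "ii (rS e) = e" using e(3) ii_rnk unfolding psi_def by auto
    then show ?thesis using tgtG[of "rS e"] inC_G[of "rS e"] e(2) by simp
  next
    case False
    then show ?thesis using e EC tgtS unfolding psi_def by auto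
  qed
qed

lemma degF: assumes v: "v \<in> VF - sinks F"
  shows "indeg C v = indeg F v" "outdeg C v = outdeg F v" "deg C v = deg F v"
proof -
  show i: "indeg C v = indeg F v" unfolding indeg_def using inSetF[OF v] by simp
  have "card (phi ` {e \<in> EF. src F e = v}) = card {e \<in> EF. src F e = v}"
    by (rule card_image) (rule inj_on_subset[OF phi_inj], blast)
  then show o: "outdeg C v = outdeg F v" unfolding outdeg_def using outC_F[OF v] by simp
  show "deg C v = deg F v" unfolding deg_def using i o by simp
qed

lemma degS: assumes v: "v \<in> VS - sources S"
  shows "indeg C v = indeg S v" "outdeg C v = outdeg S v" "deg C v = deg S v"
proof -
  show o: "outdeg C v = outdeg S v" unfolding outdeg_def using outC_S[OF v] by simp
  have "card (psi ` {e \<in> ES. tgt S e = v}) = card {e \<in> ES. tgt S e = v}"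
    by (rule card_image) (rule inj_on_subset[OF psi_inj], blast)
  then show i: "indeg C v = indeg S v" unfolding indeg_def using inSetS[OF v] by simp
  show "deg C v = deg S v" unfolding deg_def using i o by simp
qed

lemma sourcesC: "sources C = sources F - sinks F"
proof (rule set_eqI, rule iffI)
  fix v assume "v \<in> sources C"
  then have v: "v \<in> verts C" "indeg C v = 0" unfolding sources_def by auto
  from v(1) have "v \<in> VF - sinks F \<or> v \<in> VS - sources S" using VC by blast
  then show "v \<in> sources F - sinks F"
  proof
    assume a: "v \<in> VF - sinks F"
    then show ?thesis using degF(1)[OF a] v(2) unfolding sources_def by auto
  next
    assume a: "v \<in> VS - sources S"
    then show ?thesis using degS(1)[OF a] v(2) notsourceS[OF a] by simp
  qed
next
  fix v assume a: "v \<in> sources F - sinks F"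
  then have b: "v \<in> VF - sinks F" unfolding sources_def by auto
  then show "v \<in> sources C" using degF(1)[OF b] a VC unfolding sources_def by auto
qed

lemma sinksC: "sinks C = sinks S - sources S"
proof (rule set_eqI, rule iffI)
  fix v assume "v \<in> sinks C"
  then have v: "v \<in> verts C" "outdeg C v = 0" unfolding sinks_def by auto
  from v(1) have "v \<in> VF - sinks F \<or> v \<in> VS - sources S" using VC by blast
  then show "v \<in> sinks S - sources S"
  proof
    assume a: "v \<in> VF - sinks F"
    then show ?thesis using degF(2)[OF a] v(2) notsinkF[OF a] by simp
  next
    assume a: "v \<in> VS - sources S"
    then show ?thesis using degS(2)[OF a] v(2) unfolding sinks_def by auto
  qed
next
  fix v assume a: "v \<in> sinks S - sources S"
  then have b: "v \<in> VS - sources S" unfolding sinks_def by auto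
  then show "v \<in> sinks C" using degS(2)[OF b] a VC unfolding sinks_def by auto
qed

lemma bdF: assumes "v \<in> VF - sinks F" shows "v \<in> boundary C \<longleftrightarrow> v \<in> boundary F"
  using degF(3)[OF assms] assms VC unfolding boundary_def by auto
lemma bdS: assumes "v \<in> VS - sources S" shows "v \<in> boundary C \<longleftrightarrow> v \<in> boundary S"
  using degS(3)[OF assms] assms VC unfolding boundary_def by auto

lemma inputsC: "inputs C = (inputs F - OF) \<union> g ` {k. k < nn \<and> oo k \<in> inputs F}"
proof (rule set_eqI, rule iffI)
  fix x assume "x \<in> inputs C"
  then have x: "x \<in> edges C" "src C x \<in> boundary C" unfolding inputs_def by auto
  from x(1) show "x \<in> (inputs F - OF) \<union> g ` {k. k < nn \<and> oo k \<in> inputs F}"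
  proof (cases rule: EC_cases)
    case F
    have v: "src F x \<in> VF - sinks F" using prog_src[OF progF] F outdeg_pos[OF finF] unfolding sinks_def by auto
    then show ?thesis using bdF[OF v] x(2) srcF[OF F] F unfolding inputs_def by auto
  next
    case S
    have "src S x \<notin> sources S" using source_input[OF progS] S by blast
    then have v: "src S x \<in> VS - sources S" using prog_src[OF progS] S by blast
    then show ?thesis using bdS[OF v] x(2) srcS[OF S] S unfolding inputs_def by auto
  next
    case (G k)
    have v: "src F (oo k) \<in> VF - sinks F"
      using prog_src[OF progF oo_E[OF G(1)]] outdeg_pos[OF finF oo_E[OF G(1)]] unfolding sinks_def by auto
    then have "oo k \<in> inputs F" using bdF[OF v] x(2) srcG[OF G(1)] G(2) oo_E[OF G(1)] unfolding inputs_def by auto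
    then show ?thesis using G by blast
  qed
next
  fix x assume "x \<in> (inputs F - OF) \<union> g ` {k. k < nn \<and> oo k \<in> inputs F}"
  then show "x \<in> inputs C"
  proof
    assume a: "x \<in> inputs F - OF"
    then have F: "x \<in> EF - OF" unfolding inputs_def by auto
    have v: "src F x \<in> VF - sinks F" using prog_src[OF progF] F outdeg_pos[OF finF] unfolding sinks_def by auto
    then show ?thesis using bdF[OF v] srcF[OF F] F a inC_F unfolding inputs_def by auto
  next
    assume "x \<in> g ` {k. k < nn \<and> oo k \<in> inputs F}"
    then obtain k where k: "k < nn" "oo k \<in> inputs F" "x = g k" by blast
    have v: "src F (oo k) \<in> VF - sinks F"
      using prog_src[OF progF oo_E[OF k(1)]] outdeg_pos[OF finF oo_E[OF k(1)]] unfolding sinks_def by auto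
    then show ?thesis using bdF[OF v] srcG[OF k(1)] k inC_G[OF k(1)] unfolding inputs_def by auto
  qed
qed

lemma outputsC: "outputs C = (outputs S - IS) \<union> g ` {k. k < nn \<and> ii k \<in> outputs S}"
proof (rule set_eqI, rule iffI)
  fix x assume "x \<in> outputs C"
  then have x: "x \<in> edges C" "tgt C x \<in> boundary C" unfolding outputs_def by auto
  from x(1) show "x \<in> (outputs S - IS) \<union> g ` {k. k < nn \<and> ii k \<in> outputs S}"
  proof (cases rule: EC_cases)
    case F
    have "tgt F x \<notin> sinks F" using sink_output[OF progF] F by blast
    then have v: "tgt F x \<in> VF - sinks F" using prog_tgt[OF progF] F by blast
    then show ?thesis using bdF[OF v] x(2) tgtF[OF F] F unfolding outputs_def by auto
  next
    case S
    have v: "tgt S x \<in> VS - sources S" using prog_tgt[OF progS] S indeg_pos[OF finS] unfolding sources_def by auto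
    then show ?thesis using bdS[OF v] x(2) tgtS[OF S] S unfolding outputs_def by auto
  next
    case (G k)
    have v: "tgt S (ii k) \<in> VS - sources S"
      using prog_tgt[OF progS ii_E[OF G(1)]] indeg_pos[OF finS ii_E[OF G(1)]] unfolding sources_def by auto
    then have "ii k \<in> outputs S" using bdS[OF v] x(2) tgtG[OF G(1)] G(2) ii_E[OF G(1)] unfolding outputs_def by auto
    then show ?thesis using G by blast
  qed
next
  fix x assume "x \<in> (outputs S - IS) \<union> g ` {k. k < nn \<and> ii k \<in> outputs S}"
  then show "x \<in> outputs C"
  proof
    assume a: "x \<in> outputs S - IS"
    then have S: "x \<in> ES - IS" unfolding outputs_def by auto
    have v: "tgt S x \<in> VS - sources S" using prog_tgt[OF progS] S indeg_pos[OF finS] unfolding sources_def by auto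
    then show ?thesis using bdS[OF v] tgtS[OF S] S a inC_S unfolding outputs_def by auto
  next
    assume "x \<in> g ` {k. k < nn \<and> ii k \<in> outputs S}"
    then obtain k where k: "k < nn" "ii k \<in> outputs S" "x = g k" by blast
    have v: "tgt S (ii k) \<in> VS - sources S"
      using prog_tgt[OF progS ii_E[OF k(1)]] indeg_pos[OF finS ii_E[OF k(1)]] unfolding sources_def by auto
    then show ?thesis using bdS[OF v] tgtG[OF k(1)] k inC_G[OF k(1)] unfolding outputs_def by auto
  qed
qed

end


lemma estep_sub: "estep G \<subseteq> edges G \<times> edges G" unfolding estep_def by auto

lemma estep_fin: "progressive G \<Longrightarrow> finite (estep G)"
proof -
  assume p: "progressive G"
  have "finite (edges G \<times> edges G)" using prog_fin[OF p] by simp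
  then show ?thesis using estep_sub finite_subset by blast
qed

lemma prog_acyc: assumes "progressive G" shows "\<forall>e \<in> edges G. (e, e) \<notin> (estep G)\<^sup>+"
proof -
  have "finite (verts G) \<and> finite (edges G) \<and>
     (\<forall>e \<in> edges G. src G e \<in> verts G \<and> tgt G e \<in> verts G) \<and>
     (\<forall>e \<in> edges G. (e, e) \<notin> (estep G)\<^sup>+) \<and>
     (\<forall>v \<in> sources G. deg G v = 1) \<and>
     (\<forall>v \<in> sinks G. deg G v = 1)" using assms unfolding progressive_def .
  then show ?thesis by (elim conjE)
qed

lemma estep_acyc: assumes "progressive G" shows "acyclic (estep G)"
  unfolding acyclic_def
proof
  fix x show "(x,x) \<notin> (estep G)\<^sup>+"
  proof
    assume a: "(x,x) \<in> (estep G)\<^sup>+"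
    obtain z where "(x,z) \<in> estep G" using tranclD[OF a] by blast
    then have "x \<in> edges G" unfolding estep_def by simp
    then show False using a prog_acyc[OF assms] by blast
  qed
qed

lemma reach_out: assumes p: "progressive G" and e: "e \<in> edges G" "e \<notin> outputs G"
  shows "\<exists>m \<in> outputs G. reach G e m"
proof -
  have wf: "wf ((estep G)\<inverse>)" using finite_acyclic_wf_converse[OF estep_fin[OF p] estep_acyc[OF p]] .
  define Q where "Q = {e'. (e,e') \<in> (estep G)\<^sup>*}"
  have q: "e \<in> Q" unfolding Q_def by simp
  obtain m where m: "m \<in> Q" and mn: "\<And>y. (y,m) \<in> (estep G)\<inverse> \<Longrightarrow> y \<notin> Q"
    by (rule wfE_min[OF wf q]) blast
  have em: "(e,m) \<in> (estep G)\<^sup>*" using m unfolding Q_def by simp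
  have mE: "m \<in> edges G"
  proof (cases "e = m")
    case True then show ?thesis using e by simp
  next
    case False
    then have "(e,m) \<in> (estep G)\<^sup>+" using em by (simp add: rtrancl_eq_or_trancl)
    then obtain z where "(z,m) \<in> estep G" using tranclD2 by fast
    then show ?thesis unfolding estep_def by simp
  qed
  have nosucc: "(m,y) \<notin> estep G" for y
  proof
    assume "(m,y) \<in> estep G"
    then have "(e,y) \<in> (estep G)\<^sup>*" using em by (simp add: rtrancl_into_rtrancl)
    then have "y \<in> Q" unfolding Q_def by simp
    moreover have "(y,m) \<in> (estep G)\<inverse>" using \<open>(m,y) \<in> estep G\<close> by simp
    ultimately show False using mn by blast
  qed
  have emp: "{ea \<in> edges G. src G ea = tgt G m} = {}"
  proof (rule ccontr)
    assume "{ea \<in> edges G. src G ea = tgt G m} \<noteq> {}"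
    then obtain y where y: "y \<in> edges G" "src G y = tgt G m" by blast
    then have "(m,y) \<in> estep G" unfolding estep_def using mE by simp
    then show False using nosucc by blast
  qed
  have "outdeg G (tgt G m) = 0" unfolding outdeg_def emp by simp
  then have "tgt G m \<in> sinks G" using prog_tgt[OF p mE] unfolding sinks_def by simp
  then have mo: "m \<in> outputs G" using sink_output[OF p mE] by blast
  then have "e \<noteq> m" using e by blast
  then have "(e,m) \<in> (estep G)\<^sup>+" using em by (simp add: rtrancl_eq_or_trancl)
  then have "reach G e m" using \<open>e \<noteq> m\<close> unfolding reach_def by simp
  then show ?thesis using mo by (intro bexI[of _ m])
qed

lemma reach_in: assumes p: "progressive G" and e: "e \<in> edges G" "e \<notin> inputs G"
  shows "\<exists>m \<in> inputs G. reach G m e"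
proof -
  have wf: "wf (estep G)" using finite_acyclic_wf[OF estep_fin[OF p] estep_acyc[OF p]] .
  define Q where "Q = {e'. (e',e) \<in> (estep G)\<^sup>*}"
  have q: "e \<in> Q" unfolding Q_def by simp
  obtain m where m: "m \<in> Q" and mn: "\<And>y. (y,m) \<in> estep G \<Longrightarrow> y \<notin> Q"
    by (rule wfE_min[OF wf q]) blast
  have em: "(m,e) \<in> (estep G)\<^sup>*" using m unfolding Q_def by simp
  have mE: "m \<in> edges G"
  proof (cases "e = m")
    case True then show ?thesis using e by simp
  next
    case False
    then have "(m,e) \<in> (estep G)\<^sup>+" using em by (simp add: rtrancl_eq_or_trancl)
    then obtain z where "(m,z) \<in> estep G" using tranclD by fast
    then show ?thesis unfolding estep_def by simp
  qed
  have nopred: "(y,m) \<notin> estep G" for y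
  proof
    assume a: "(y,m) \<in> estep G"
    then have "(y,e) \<in> (estep G)\<^sup>*" using em by (simp add: converse_rtrancl_into_rtrancl)
    then have "y \<in> Q" unfolding Q_def by simp
    then show False using mn[OF a] by blast
  qed
  have emp: "{ea \<in> edges G. tgt G ea = src G m} = {}"
  proof (rule ccontr)
    assume "{ea \<in> edges G. tgt G ea = src G m} \<noteq> {}"
    then obtain y where y: "y \<in> edges G" "tgt G y = src G m" by blast
    then have "(y,m) \<in> estep G" unfolding estep_def using mE by simp
    then show False using nopred by blast
  qed
  have "indeg G (src G m) = 0" unfolding indeg_def emp by simp
  then have "src G m \<in> sources G" using prog_src[OF p mE] unfolding sources_def by simp
  then have mo: "m \<in> inputs G" using source_input[OF p mE] by blast
  then have "e \<noteq> m" using e by blast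
  then have "(m,e) \<in> (estep G)\<^sup>+" using em by (simp add: rtrancl_eq_or_trancl)
  then have "reach G m e" using \<open>e \<noteq> m\<close> unfolding reach_def by simp
  then show ?thesis using mo by (intro bexI[of _ m])
qed

lemma pop_parts: assumes "pop G R"
  shows "progressive G" "R \<subseteq> edges G \<times> edges G" "strict_linear_order_on (edges G) R"
    "\<And>e1 e2. reach G e1 e2 \<Longrightarrow> (e1, e2) \<in> R"
proof -
  have a: "progressive G \<and> planar_order G R" using assms unfolding pop_def .
  then show "progressive G" by (rule conjunct1)
  have b: "R \<subseteq> edges G \<times> edges G \<and> strict_linear_order_on (edges G) R \<and>
     (\<forall>e1 e2. reach G e1 e2 \<longrightarrow> (e1, e2) \<in> R) \<and>
     (\<forall>e1 e2 e3. (e1, e2) \<in> R \<and> (e2, e3) \<in> R \<and> reach G e1 e3 \<longrightarrow>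
                  reach G e1 e2 \<or> reach G e2 e3)" using conjunct2[OF a] unfolding planar_order_def .
  then show "R \<subseteq> edges G \<times> edges G" by (elim conjE)
  from b show "strict_linear_order_on (edges G) R" by (elim conjE)
  from b show "\<And>e1 e2. reach G e1 e2 \<Longrightarrow> (e1, e2) \<in> R" by (elim conjE) blast
qed

lemma pop_prog: "pop G R \<Longrightarrow> progressive G" by (rule pop_parts(1))

lemma pop_korder: assumes "pop G R" shows "korder R (edges G) (rnk R (edges G))"
  by (rule korder_lin[OF prog_fin[OF pop_parts(1)[OF assms]] pop_parts(2,3)[OF assms]])

lemma pop_trans_irr: assumes "pop G R" shows "trans R" "irrefl R"
proof -
  have a: "trans R \<and> irrefl R \<and> total_on (edges G) R" using pop_parts(3)[OF assms] unfolding strict_linear_order_on_def .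
  from a show "trans R" by (elim conjE)
  from a show "irrefl R" by (elim conjE)
qed

lemma pop_last: assumes p: "pop G R" and x: "x \<in> edges G - outputs G"
  shows "rnk R (outputs G) x < card (outputs G)"
proof -
  obtain m where m: "m \<in> outputs G" "reach G x m" using reach_out[OF pop_prog[OF p]] x by blast
  have xm: "(x,m) \<in> R" using pop_parts(4)[OF p m(2)] .
  have "{y \<in> outputs G. (y,x) \<in> R} \<subseteq> outputs G - {m}"
  proof
    fix y assume y: "y \<in> {y \<in> outputs G. (y,x) \<in> R}"
    have "y \<noteq> m"
    proof
      assume "y = m"
      then have "(m,x) \<in> R" using y by simp
      then have "(m,m) \<in> R" using xm transD[OF pop_trans_irr(1)[OF p]] by blast
      then show False using pop_trans_irr(2)[OF p] unfolding irrefl_def by blast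
    qed
    then show "y \<in> outputs G - {m}" using y by blast
  qed
  moreover have fo: "finite (outputs G)" using prog_fin[OF pop_prog[OF p]] unfolding outputs_def by simp
  ultimately have "rnk R (outputs G) x \<le> card (outputs G - {m})" unfolding rnk_def by (simp add: card_mono)
  moreover have "card (outputs G) > 0" using fo m(1) card_gt_0_iff by blast
  moreover have "card (outputs G - {m}) = card (outputs G) - 1" using fo m(1) by simp
  ultimately show ?thesis by linarith
qed

lemma pop_first: assumes p: "pop G R" and x: "x \<in> edges G - inputs G"
  shows "1 \<le> rnk R (inputs G) x"
proof -
  obtain m where m: "m \<in> inputs G" "reach G m x" using reach_in[OF pop_prog[OF p]] x by blast
  have xm: "(m,x) \<in> R" using pop_parts(4)[OF p m(2)] .
  have fo: "finite (inputs G)" using prog_fin[OF pop_prog[OF p]] unfolding inputs_def by simp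
  have "m \<in> {y \<in> inputs G. (y,x) \<in> R}" using m xm by blast
  then have "{y \<in> inputs G. (y,x) \<in> R} \<noteq> {}" by blast
  then have "card {y \<in> inputs G. (y,x) \<in> R} \<noteq> 0" using fo by simp
  then show ?thesis unfolding rnk_def by linarith
qed



lemma image_filter: "{y \<in> f ` A. P y} = f ` {x \<in> A. P (f x)}" by auto

locale trip =
  fixes G1 G2 G3 :: "('v, 'a set) pgraph"
    and R1 R2 R3 :: "('a set \<times> 'a set) set"
  assumes p1: "pop G1 R1" and p2: "pop G2 R2" and p3: "pop G3 R3"
    and c12: "card (outputs G1) = card (inputs G2)"
    and c23: "card (outputs G2) = card (inputs G3)"
    and d1: "disjoint_names G1" and d2: "disjoint_names G2" and d3: "disjoint_names G3"
    and u12: "\<Union>(edges G1) \<inter> \<Union>(edges G2) = {}"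
    and u13: "\<Union>(edges G1) \<inter> \<Union>(edges G3) = {}"
    and u23: "\<Union>(edges G2) \<inter> \<Union>(edges G3) = {}"
    and v12: "verts G1 \<inter> verts G2 = {}"
    and v13: "verts G1 \<inter> verts G3 = {}"
    and v23: "verts G2 \<inter> verts G3 = {}"
begin

abbreviation "f1 \<equiv> rnk R1 (edges G1)"
abbreviation "f2 \<equiv> rnk R2 (edges G2)"
abbreviation "f3 \<equiv> rnk R3 (edges G3)"

lemma k1: "korder R1 (edges G1) f1" by (rule pop_korder[OF p1])
lemma k2: "korder R2 (edges G2) f2" by (rule pop_korder[OF p2])
lemma k3: "korder R3 (edges G3) f3" by (rule pop_korder[OF p3])

sublocale B: cprog G1 R1 f1 G2 R2 f2
  by unfold_locales (use prog_fin[OF pop_prog[OF p1]] prog_fin[OF pop_prog[OF p2]] k1 k2 c12 d1 d2 u12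
      pop_prog[OF p1] pop_prog[OF p2] v12 in auto)

sublocale A: cprog G2 R2 f2 G3 R3 f3
  by unfold_locales (use prog_fin[OF pop_prog[OF p2]] prog_fin[OF pop_prog[OF p3]] k2 k3 c23 d2 d3 u23
      pop_prog[OF p2] pop_prog[OF p3] v23 in auto)

abbreviation "n \<equiv> card (outputs G1)"
abbreviation "m \<equiv> card (outputs G2)"

lemma KA: "korder A.CO (edges A.C) A.key1"
  by (rule A.key1_korder) (use pop_first[OF p3] in blast)
lemma KB: "korder B.CO (edges B.C) B.key2"
  by (rule B.key2_korder) (use pop_last[OF p1] in blast)

lemma inA: "inputs A.C = A.phi ` inputs G2"
proof (rule set_eqI, rule iffI)
  fix x assume "x \<in> inputs A.C"
  then have "x \<in> (inputs G2 - outputs G2) \<union> A.g ` {k. k < m \<and> A.oo k \<in> inputs G2}" using A.inputsC by simp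
  then show "x \<in> A.phi ` inputs G2"
  proof
    assume "x \<in> inputs G2 - outputs G2"
    then show ?thesis unfolding A.phi_def by force
  next
    assume "x \<in> A.g ` {k. k < m \<and> A.oo k \<in> inputs G2}"
    then obtain k where k: "k < m" "A.oo k \<in> inputs G2" "x = A.g k" by blast
    have "A.phi (A.oo k) = A.g k" unfolding A.phi_def using A.oo_props[OF k(1)] by simp
    then show ?thesis using k by (metis image_eqI)
  qed
next
  fix x assume "x \<in> A.phi ` inputs G2"
  then obtain i where i: "i \<in> inputs G2" "x = A.phi i" by blast
  show "x \<in> inputs A.C"
  proof (cases "i \<in> outputs G2")
    case True
    then have "x = A.g (A.rF i)" "A.rF i < m" "A.oo (A.rF i) = i" using i(2) A.oo_rnk unfolding A.phi_def by auto
    then show ?thesis using A.inputsC i(1) by auto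
  next
    case False
    then show ?thesis using A.inputsC i unfolding A.phi_def by auto
  qed
qed

lemma outB: "outputs B.C = B.psi ` outputs G2"
proof (rule set_eqI, rule iffI)
  fix x assume "x \<in> outputs B.C"
  then have "x \<in> (outputs G2 - inputs G2) \<union> B.g ` {k. k < n \<and> B.ii k \<in> outputs G2}" using B.outputsC by simp
  then show "x \<in> B.psi ` outputs G2"
  proof
    assume "x \<in> outputs G2 - inputs G2"
    then show ?thesis unfolding B.psi_def by force
  next
    assume "x \<in> B.g ` {k. k < n \<and> B.ii k \<in> outputs G2}"
    then obtain k where k: "k < n" "B.ii k \<in> outputs G2" "x = B.g k" by blast
    have "B.psi (B.ii k) = B.g k" unfolding B.psi_def using B.ii_props[OF k(1)] by simp
    then show ?thesis using k by (metis image_eqI)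
  qed
next
  fix x assume "x \<in> B.psi ` outputs G2"
  then obtain i where i: "i \<in> outputs G2" "x = B.psi i" by blast
  show "x \<in> outputs B.C"
  proof (cases "i \<in> inputs G2")
    case True
    then have "x = B.g (B.rS i)" "B.rS i < n" "B.ii (B.rS i) = i" using i(2) B.ii_rnk unfolding B.psi_def by auto
    then show ?thesis using B.outputsC i(1) by auto
  next
    case False
    then show ?thesis using B.outputsC i unfolding B.psi_def by auto
  qed
qed

lemma phi_EA: "i \<in> edges G2 \<Longrightarrow> A.phi i \<in> edges A.C"
  unfolding A.phi_def using A.inC_F A.inC_G A.oo_rnk by auto
lemma psi_EB: "i \<in> edges G2 \<Longrightarrow> B.psi i \<in> edges B.C"
  unfolding B.psi_def using B.inC_S B.inC_G B.ii_rnk by auto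

lemma in2_sub: "inputs G2 \<subseteq> edges G2" unfolding inputs_def by auto
lemma out2_sub: "outputs G2 \<subseteq> edges G2" unfolding outputs_def by auto

lemma key1_phi: "i \<in> edges G2 \<Longrightarrow> A.key1 (A.phi i) = (f2 i, 0, None)"
proof (cases "i \<in> outputs G2")
  case True
  then have "A.phi i = A.g (A.rF i)" "A.rF i < m" "A.oo (A.rF i) = i" using A.oo_rnk unfolding A.phi_def by auto
  then show ?thesis using A.key1G by simp
next
  case False
  assume "i \<in> edges G2"
  then show ?thesis using False A.key1F unfolding A.phi_def by simp
qed

lemma key2_psi: "i \<in> edges G2 \<Longrightarrow> B.key2 (B.psi i) = (f2 i, 1, None)"
proof (cases "i \<in> inputs G2")
  case True
  then have "B.psi i = B.g (B.rS i)" "B.rS i < n" "B.ii (B.rS i) = i" using B.ii_rnk unfolding B.psi_def by auto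
  then show ?thesis using B.key2G by simp
next
  case False
  assume "i \<in> edges G2"
  then show ?thesis using False B.key2S unfolding B.psi_def by simp
qed

lemma inA_sub: "inputs A.C \<subseteq> edges A.C" unfolding inputs_def by auto
lemma outB_sub: "outputs B.C \<subseteq> edges B.C" unfolding outputs_def by auto
lemma fin_inA: "finite (inputs A.C)" using inA_sub A.finC finite_subset by blast
lemma fin_outB: "finite (outputs B.C)" using outB_sub B.finC finite_subset by blast

lemma rnk_inA: assumes "i \<in> inputs G2" shows "rnk A.CO (inputs A.C) (A.phi i) = rnk R2 (inputs G2) i"
proof -
  have "rnk A.CO (inputs A.C) (A.phi i) = card {y \<in> inputs A.C. A.key1 y < A.key1 (A.phi i)}"
    using rnk_korder[OF KA inA_sub phi_EA] assms in2_sub by blast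
  also have "\<dots> = card (A.phi ` {i' \<in> inputs G2. A.key1 (A.phi i') < A.key1 (A.phi i)})"
    unfolding inA image_filter ..
  also have "\<dots> = card {i' \<in> inputs G2. A.key1 (A.phi i') < A.key1 (A.phi i)}"
    by (rule card_image, rule inj_on_subset[OF A.phi_inj]) (use in2_sub in blast)
  also have "{i' \<in> inputs G2. A.key1 (A.phi i') < A.key1 (A.phi i)} = {i' \<in> inputs G2. f2 i' < f2 i}"
  proof (rule Collect_cong)
    fix i' have ie: "i \<in> edges G2" using assms in2_sub by blast
    show "i' \<in> inputs G2 \<and> A.key1 (A.phi i') < A.key1 (A.phi i) \<longleftrightarrow> i' \<in> inputs G2 \<and> f2 i' < f2 i"
    proof (cases "i' \<in> inputs G2")
      case True
      then have "i' \<in> edges G2" using in2_sub by blast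
      then show ?thesis using True key1_phi[OF ie] key1_phi[of i'] by (simp add: lex3 del: less_prod_simp)
    qed simp
  qed
  also have "card \<dots> = rnk R2 (inputs G2) i"
    using rnk_korder[OF k2 in2_sub] assms in2_sub by auto
  finally show ?thesis .
qed

lemma rnk_outB: assumes "i \<in> outputs G2" shows "rnk B.CO (outputs B.C) (B.psi i) = rnk R2 (outputs G2) i"
proof -
  have "rnk B.CO (outputs B.C) (B.psi i) = card {y \<in> outputs B.C. B.key2 y < B.key2 (B.psi i)}"
    using rnk_korder[OF KB outB_sub psi_EB] assms out2_sub by blast
  also have "\<dots> = card (B.psi ` {i' \<in> outputs G2. B.key2 (B.psi i') < B.key2 (B.psi i)})"
    unfolding outB image_filter ..
  also have "\<dots> = card {i' \<in> outputs G2. B.key2 (B.psi i') < B.key2 (B.psi i)}"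
    by (rule card_image, rule inj_on_subset[OF B.psi_inj]) (use out2_sub in blast)
  also have "{i' \<in> outputs G2. B.key2 (B.psi i') < B.key2 (B.psi i)} = {i' \<in> outputs G2. f2 i' < f2 i}"
  proof (rule Collect_cong)
    fix i' have ie: "i \<in> edges G2" using assms out2_sub by blast
    show "i' \<in> outputs G2 \<and> B.key2 (B.psi i') < B.key2 (B.psi i) \<longleftrightarrow> i' \<in> outputs G2 \<and> f2 i' < f2 i"
    proof (cases "i' \<in> outputs G2")
      case True
      then have "i' \<in> edges G2" using out2_sub by blast
      then show ?thesis using True key2_psi[OF ie] key2_psi[of i'] by (simp add: lex3 del: less_prod_simp)
    qed simp
  qed
  also have "card \<dots> = rnk R2 (outputs G2) i"
    using rnk_korder[OF k2 out2_sub] assms out2_sub by auto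
  finally show ?thesis .
qed

lemma card_inA: "card (inputs A.C) = n"
  unfolding inA using card_image[OF inj_on_subset[OF A.phi_inj in2_sub]] c12 by simp
lemma card_outB: "card (outputs B.C) = card (inputs G3)"
  unfolding outB using card_image[OF inj_on_subset[OF B.psi_inj out2_sub]] c23 by simp

lemma nth_inA: assumes "k < n" shows "nth_in A.CO (inputs A.C) k = A.phi (B.ii k)"
proof -
  have i: "B.ii k \<in> inputs G2" "B.rS (B.ii k) = k" using B.ii_props[OF assms] by auto
  then have "A.phi (B.ii k) \<in> inputs A.C" unfolding inA by blast
  from nth_in_rnk[OF KA inA_sub fin_inA this] show ?thesis using rnk_inA[OF i(1)] i(2) by simp
qed

lemma nth_outB: assumes "j < m" shows "nth_in B.CO (outputs B.C) j = B.psi (A.oo j)"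
proof -
  have i: "A.oo j \<in> outputs G2" "A.rF (A.oo j) = j" using A.oo_props[OF assms] by auto
  then have "B.psi (A.oo j) \<in> outputs B.C" unfolding outB by blast
  from nth_in_rnk[OF KB outB_sub fin_outB this] show ?thesis using rnk_outB[OF i(1)] i(2) by simp
qed

end


context trip begin

lemma UA: "\<Union>(edges G1) \<inter> \<Union>(edges A.C) = {}" using A.UC u12 u13 by blast
lemma UB: "\<Union>(edges B.C) \<inter> \<Union>(edges G3) = {}" using B.UC u13 u23 by blast

sublocale L: cset G1 R1 f1 A.C A.CO A.key1
  by unfold_locales (use prog_fin[OF pop_prog[OF p1]] A.finC k1 KA card_inA d1 A.dn_C UA in auto)

sublocale R: cset B.C B.CO B.key2 G3 R3 f3
  by unfold_locales (use B.finC prog_fin[OF pop_prog[OF p3]] KB k3 card_outB B.dn_C d3 UB in auto)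

lemma KL: "korder L.CO (edges L.C) L.key2"
  by (rule L.key2_korder) (use pop_last[OF p1] in blast)
lemma KR: "korder R.CO (edges R.C) R.key1"
  by (rule R.key1_korder) (use pop_first[OF p3] in blast)

lemma L_oo: "L.oo k = B.oo k" unfolding L.oo_def B.oo_def ..
lemma L_ii: "k < n \<Longrightarrow> L.ii k = A.phi (B.ii k)" unfolding L.ii_def using nth_inA by simp
lemma R_ii: "R.ii j = A.ii j" unfolding R.ii_def A.ii_def ..
lemma R_oo: "j < m \<Longrightarrow> R.oo j = B.psi (A.oo j)" unfolding R.oo_def using nth_outB by simp
lemma L_nn: "L.nn = n" ..
lemma R_nn: "R.nn = m" using card_outB c23 by simp
lemma L_rF: "L.rF x = B.rF x" ..
lemma R_rS: "R.rS x = A.rS x" ..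

end


definition DD :: "(nat \<times> nat \<times> nat option) set" where
  "DD = {v. fst (snd v) \<le> 2 \<and> (fst (snd v) = 1 \<longrightarrow> snd (snd v) = None)}"

definition FL :: "nat \<times> nat \<times> nat option \<Rightarrow> (nat \<times> nat \<times> nat option) \<times> nat \<times> nat option" where
  "FL v = (case v of (P,t,z) \<Rightarrow> if t = 0 then ((P,0,None),0,z) else if t = 1 then ((P,0,None),1,None) else ((P,1,z),1,None))"

definition FR :: "nat \<times> nat \<times> nat option \<Rightarrow> (nat \<times> nat \<times> nat option) \<times> nat \<times> nat option" where
  "FR v = (case v of (P,t,z) \<Rightarrow> if t = 0 then ((P,0,z),0,None) else if t = 1 then ((P,1,None),0,None) else ((P,1,None),1,z))"

lemma FL_mono: assumes "a \<in> DD" "b \<in> DD" shows "FL a < FL b \<longleftrightarrow> a < b"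
proof -
  obtain P t z where a: "a = (P,t,z)" by (cases a) auto
  obtain P' t' z' where b: "b = (P',t',z')" by (cases b) auto
  have t: "t = 0 \<or> t = 1 \<and> z = None \<or> t = 2" using assms(1) a unfolding DD_def by auto
  have t': "t' = 0 \<or> t' = 1 \<and> z' = None \<or> t' = 2" using assms(2) b unfolding DD_def by auto
  show ?thesis using t t' unfolding a b FL_def
    by (auto simp add: lex3 simp del: less_prod_simp)
qed

lemma FR_mono: assumes "a \<in> DD" "b \<in> DD" shows "FR a < FR b \<longleftrightarrow> a < b"
proof -
  obtain P t z where a: "a = (P,t,z)" by (cases a) auto
  obtain P' t' z' where b: "b = (P',t',z')" by (cases b) auto
  have t: "t = 0 \<or> t = 1 \<and> z = None \<or> t = 2" using assms(1) a unfolding DD_def by auto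
  have t': "t' = 0 \<or> t' = 1 \<and> z' = None \<or> t' = 2" using assms(2) b unfolding DD_def by auto
  show ?thesis using t t' unfolding a b FR_def
    by (auto simp add: lex3 simp del: less_prod_simp)
qed

lemma DD0: "(P, 0, z) \<in> DD" unfolding DD_def by simp
lemma DD1: "(P, 1, None) \<in> DD" unfolding DD_def by simp
lemma DD2: "(P, 2, z) \<in> DD" unfolding DD_def by simp
lemma FL0: "FL (P,0,z) = ((P,0,None),0,z)" unfolding FL_def by simp
lemma FL1: "FL (P,1,None) = ((P,0,None),1,None)" unfolding FL_def by simp
lemma FL2: "FL (P,2,z) = ((P,1,z),1,None)" unfolding FL_def by simp
lemma FR0: "FR (P,0,z) = ((P,0,z),0,None)" unfolding FR_def by simp
lemma FR1: "FR (P,1,None) = ((P,1,None),0,None)" unfolding FR_def by simp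
lemma FR2: "FR (P,2,z) = ((P,1,None),1,z)" unfolding FR_def by simp



context trip begin

definition etyp where
  "etyp x \<longleftrightarrow> (x \<in> edges G1 - outputs G1) \<or> (x \<in> edges G2 - inputs G2 \<and> x \<notin> outputs G2) \<or>
     (x \<in> edges G3 - inputs G3) \<or> (\<exists>k. k < n \<and> B.ii k \<notin> outputs G2 \<and> x = B.g k) \<or>
     (\<exists>j. j < m \<and> A.oo j \<notin> inputs G2 \<and> x = A.g j) \<or>
     (\<exists>k j. k < n \<and> j < m \<and> B.ii k = A.oo j \<and> x = B.oo k \<union> A.g j)"

lemma phi_notout: "i \<notin> outputs G2 \<Longrightarrow> A.phi i = i" unfolding A.phi_def by simp
lemma phi_out: "i \<in> outputs G2 \<Longrightarrow> A.phi i = A.g (A.rF i)" unfolding A.phi_def by simp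
lemma psi_notin: "i \<notin> inputs G2 \<Longrightarrow> B.psi i = i" unfolding B.psi_def by simp
lemma psi_in: "i \<in> inputs G2 \<Longrightarrow> B.psi i = B.g (B.rS i)" unfolding B.psi_def by simp

lemma Lg: "k < n \<Longrightarrow> L.g k = B.oo k \<union> A.phi (B.ii k)" using L.g_def L_oo L_ii by simp
lemma Rg: "j < m \<Longrightarrow> R.g j = B.psi (A.oo j) \<union> A.ii j" using R.g_def R_oo R_ii by simp

lemma g6: assumes "B.ii k = A.oo j" shows "B.g k \<union> A.ii j = B.oo k \<union> A.g j"
  using assms B.g_def A.g_def by auto

lemma L_cover: assumes x: "x \<in> edges L.C" shows "etyp x"
  using x
proof (cases rule: L.EC_cases)
  case F then show ?thesis unfolding etyp_def by blast
next
  case S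
  then have xa: "x \<in> edges A.C" "x \<notin> inputs A.C" by auto
  from xa(1) show ?thesis
  proof (cases rule: A.EC_cases)
    case F
    have "x \<notin> inputs G2"
    proof
      assume "x \<in> inputs G2"
      then have "A.phi x \<in> inputs A.C" unfolding inA by blast
      then show False using xa(2) phi_notout F by auto
    qed
    then show ?thesis using F unfolding etyp_def by blast
  next
    case S then show ?thesis unfolding etyp_def by blast
  next
    case (G j)
    have "A.oo j \<notin> inputs G2"
    proof
      assume "A.oo j \<in> inputs G2"
      then have "A.phi (A.oo j) \<in> inputs A.C" unfolding inA by blast
      moreover have "A.phi (A.oo j) = A.g j" using phi_out A.oo_props[OF G(1)] by simp
      ultimately show False using xa(2) G(2) by simp
    qed
    then show ?thesis using G unfolding etyp_def by blast
  qed
next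
  case (G k)
  then have k: "k < n" "x = B.oo k \<union> A.phi (B.ii k)" using Lg by auto
  show ?thesis
  proof (cases "B.ii k \<in> outputs G2")
    case True
    define j where "j = A.rF (B.ii k)"
    have j: "j < m" "A.oo j = B.ii k" using A.oo_rnk[OF True] unfolding j_def by auto
    have "x = B.oo k \<union> A.g j" using k(2) phi_out[OF True] unfolding j_def by simp
    then show ?thesis using k(1) j unfolding etyp_def by metis
  next
    case False
    then have "x = B.g k" using k(2) phi_notout B.g_def by simp
    then show ?thesis using k(1) False unfolding etyp_def by blast
  qed
qed

lemma R_cover: assumes x: "x \<in> edges R.C" shows "etyp x"
  using x
proof (cases rule: R.EC_cases)
  case F
  then have xb: "x \<in> edges B.C" "x \<notin> outputs B.C" by auto
  from xb(1) show ?thesis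
  proof (cases rule: B.EC_cases)
    case F then show ?thesis unfolding etyp_def by blast
  next
    case S
    have "x \<notin> outputs G2"
    proof
      assume "x \<in> outputs G2"
      then have "B.psi x \<in> outputs B.C" unfolding outB by blast
      then show False using xb(2) psi_notin S by auto
    qed
    then show ?thesis using S unfolding etyp_def by blast
  next
    case (G k)
    have "B.ii k \<notin> outputs G2"
    proof
      assume "B.ii k \<in> outputs G2"
      then have "B.psi (B.ii k) \<in> outputs B.C" unfolding outB by blast
      moreover have "B.psi (B.ii k) = B.g k" using psi_in B.ii_props[OF G(1)] by simp
      ultimately show False using xb(2) G(2) by simp
    qed
    then show ?thesis using G unfolding etyp_def by blast
  qed
next
  case S then show ?thesis unfolding etyp_def by blast
next
  case (G j)
  then have j: "j < m" "x = B.psi (A.oo j) \<union> A.ii j" using Rg R_nn by auto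
  show ?thesis
  proof (cases "A.oo j \<in> inputs G2")
    case True
    define k where "k = B.rS (A.oo j)"
    have k: "k < n" "B.ii k = A.oo j" using B.ii_rnk[OF True] unfolding k_def by auto
    have "x = B.g k \<union> A.ii j" using j(2) psi_in[OF True] unfolding k_def by simp
    then have "x = B.oo k \<union> A.g j" using g6[OF k(2)] by simp
    then show ?thesis using j(1) k unfolding etyp_def by metis
  next
    case False
    then have "x = A.g j" using j(2) psi_notin A.g_def by simp
    then show ?thesis using j(1) False unfolding etyp_def by blast
  qed
qed

end


context trip begin

definition "info x \<longleftrightarrow> x \<in> edges L.C \<and> x \<in> edges R.C \<and> src L.C x = src R.C x \<and> tgt L.C x = tgt R.C x \<and>
   (\<exists>v \<in> DD. L.key2 x = FL v \<and> R.key1 x = FR v)"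

lemma T1: assumes x: "x \<in> edges G1 - outputs G1" shows "info x"
proof -
  define r where "r = B.rF x"
  have r: "r < n" using pop_last[OF p1 x] unfolding r_def by simp
  have iE: "B.ii r \<in> edges G2" using B.ii_E[OF r] .
  have xB: "x \<in> edges B.C" using B.inC_F[OF x] .
  have xnB: "x \<notin> outputs B.C"
  proof
    assume "x \<in> outputs B.C"
    then obtain p where p: "p \<in> outputs G2" "x = B.psi p" unfolding outB by blast
    show False
    proof (cases "p \<in> inputs G2")
      case True
      then have "B.g (B.rS p) = x" using p psi_in by simp
      then show False using B.g_notF B.ii_rnk[OF True] x by blast
    next
      case False
      then have "p = x" using p psi_notin by simp
      then show False using x p(1) out2_sub B.F_notS by blast
    qed
  qed
  have xR: "x \<in> R.EF - R.OF" using xB xnB by blast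
  have xL: "x \<in> L.EF - L.OF" using x by simp
  have kL: "L.key2 x = FL (f2 (B.ii r), 0, Some (f1 x))"
    using L.key2F[OF xL] L_ii[OF r] key1_phi[OF iE] FL0 unfolding r_def by simp
  have kR: "R.key1 x = FR (f2 (B.ii r), 0, Some (f1 x))"
    using R.key1F[OF xR] B.key2F[OF x] FR0 unfolding r_def by simp
  have s: "src L.C x = src R.C x" using L.srcF[OF xL] R.srcF[OF xR] B.srcF[OF x] by simp
  have t: "tgt L.C x = tgt R.C x" using L.tgtF[OF xL] R.tgtF[OF xR] B.tgtF[OF x] by simp
  show ?thesis unfolding info_def using L.inC_F[OF xL] R.inC_F[OF xR] s t kL kR DD0 by blast
qed

lemma T2: assumes x: "x \<in> edges G2 - inputs G2" "x \<notin> outputs G2" shows "info x"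
proof -
  have xA: "x \<in> edges A.C" using A.inC_F x by blast
  have xnA: "x \<notin> inputs A.C"
  proof
    assume "x \<in> inputs A.C"
    then obtain i where i: "i \<in> inputs G2" "x = A.phi i" unfolding inA by blast
    show False
    proof (cases "i \<in> outputs G2")
      case True
      then have "A.g (A.rF i) = x" using i phi_out by simp
      then show False using A.g_notF A.oo_rnk[OF True] x by blast
    next
      case False
      then have "i = x" using i phi_notout by simp
      then show False using x i(1) by blast
    qed
  qed
  have xB: "x \<in> edges B.C" using B.inC_S x by blast
  have xnB: "x \<notin> outputs B.C"
  proof
    assume "x \<in> outputs B.C"
    then obtain p where p: "p \<in> outputs G2" "x = B.psi p" unfolding outB by blast
    show False
    proof (cases "p \<in> inputs G2")
      case True
      then have "B.g (B.rS p) = x" using p psi_in by simp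
      then show False using B.g_notS B.ii_rnk[OF True] x by blast
    next
      case False
      then have "p = x" using p psi_notin by simp
      then show False using x p(1) by blast
    qed
  qed
  have xR: "x \<in> R.EF - R.OF" using xB xnB by blast
  have xL: "x \<in> L.ES - L.IS" using xA xnA by blast
  have x2a: "x \<in> A.EF - A.OF" using x by blast
  have x2b: "x \<in> B.ES - B.IS" using x by blast
  have kL: "L.key2 x = FL (f2 x, 1, None)"
    using L.key2S[OF xL] A.key1F[OF x2a] FL1 by simp
  have kR: "R.key1 x = FR (f2 x, 1, None)"
    using R.key1F[OF xR] B.key2S[OF x2b] FR1 by simp
  have s: "src L.C x = src R.C x" using L.srcS[OF xL] R.srcF[OF xR] A.srcF[OF x2a] B.srcS[OF x2b] by simp
  have t: "tgt L.C x = tgt R.C x" using L.tgtS[OF xL] R.tgtF[OF xR] A.tgtF[OF x2a] B.tgtS[OF x2b] by simp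
  show ?thesis unfolding info_def using L.inC_S[OF xL] R.inC_F[OF xR] s t kL kR DD1 by blast
qed

lemma T3: assumes x: "x \<in> edges G3 - inputs G3" shows "info x"
proof -
  define s where "s = A.rS x"
  have s: "1 \<le> s" "s - 1 < m" using pop_first[OF p3 x] A.rS_le[of x] unfolding s_def by auto
  have xA: "x \<in> edges A.C" using A.inC_S x by blast
  have xnA: "x \<notin> inputs A.C"
  proof
    assume "x \<in> inputs A.C"
    then obtain i where i: "i \<in> inputs G2" "x = A.phi i" unfolding inA by blast
    show False
    proof (cases "i \<in> outputs G2")
      case True
      then have "A.g (A.rF i) = x" using i phi_out by simp
      then show False using A.g_notS A.oo_rnk[OF True] x by blast
    next
      case False
      then have "i = x" using i phi_notout by simp
      then show False using x i(1) in2_sub A.F_notS by blast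
    qed
  qed
  have xL: "x \<in> L.ES - L.IS" using xA xnA by blast
  have xR: "x \<in> R.ES - R.IS" using x by simp
  have oE: "A.oo (s - 1) \<in> edges G2" using A.oo_E[OF s(2)] .
  have kL: "L.key2 x = FL (f2 (A.oo (s - 1)), 2, Some (f3 x))"
    using L.key2S[OF xL] A.key1S[OF x] FL2 unfolding s_def by simp
  have kR: "R.key1 x = FR (f2 (A.oo (s - 1)), 2, Some (f3 x))"
    using R.key1S[OF xR] R_oo[OF s(2)] key2_psi[OF oE] FR2 unfolding s_def by simp
  have sr: "src L.C x = src R.C x" using L.srcS[OF xL] R.srcS[OF xR] A.srcS[OF x] by simp
  have t: "tgt L.C x = tgt R.C x" using L.tgtS[OF xL] R.tgtS[OF xR] A.tgtS[OF x] by simp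
  show ?thesis unfolding info_def using L.inC_S[OF xL] R.inC_S[OF xR] sr t kL kR DD2 by blast
qed

lemma T4: assumes k: "k < n" "B.ii k \<notin> outputs G2" shows "info (B.g k)"
proof -
  have iE: "B.ii k \<in> edges G2" using B.ii_E[OF k(1)] .
  have Lg4: "L.g k = B.g k" using Lg[OF k(1)] phi_notout[OF k(2)] B.g_def by simp
  have xB: "B.g k \<in> edges B.C" using B.inC_G[OF k(1)] .
  have xnB: "B.g k \<notin> outputs B.C"
  proof
    assume "B.g k \<in> outputs B.C"
    then obtain p where p: "p \<in> outputs G2" "B.g k = B.psi p" unfolding outB by blast
    show False
    proof (cases "p \<in> inputs G2")
      case True
      then have "B.g (B.rS p) = B.g k" using p psi_in by simp
      then have "B.rS p = k" using B.g_inj B.ii_rnk[OF True] k(1) by blast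
      then have "p = B.ii k" using B.ii_rnk[OF True] by simp
      then show False using p(1) k(2) by simp
    next
      case False
      then have "p = B.g k" using p psi_notin by simp
      then show False using B.g_notS[OF k(1)] p(1) out2_sub by blast
    qed
  qed
  have xR: "B.g k \<in> R.EF - R.OF" using xB xnB by blast
  have kL: "L.key2 (B.g k) = FL (f2 (B.ii k), 1, None)"
    using L.key2G[OF k(1)] Lg4 L_ii[OF k(1)] key1_phi[OF iE] FL1 by simp
  have kR: "R.key1 (B.g k) = FR (f2 (B.ii k), 1, None)"
    using R.key1F[OF xR] B.key2G[OF k(1)] FR1 by simp
  have iA: "B.ii k \<in> A.EF - A.OF" using iE k(2) by blast
  have s: "src L.C (B.g k) = src R.C (B.g k)"
    using L.srcG[OF k(1)] Lg4 R.srcF[OF xR] B.srcG[OF k(1)] L_oo by simp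
  have t: "tgt L.C (B.g k) = tgt R.C (B.g k)"
    using L.tgtG[OF k(1)] Lg4 L_ii[OF k(1)] phi_notout[OF k(2)] A.tgtF[OF iA] R.tgtF[OF xR] B.tgtG[OF k(1)] by simp
  show ?thesis unfolding info_def using L.inC_G[OF k(1)] Lg4 R.inC_F[OF xR] s t kL kR DD1 by auto
qed

lemma T5: assumes j: "j < m" "A.oo j \<notin> inputs G2" shows "info (A.g j)"
proof -
  have oE: "A.oo j \<in> edges G2" using A.oo_E[OF j(1)] .
  have Rg5: "R.g j = A.g j" using Rg[OF j(1)] psi_notin[OF j(2)] A.g_def by simp
  have xA: "A.g j \<in> edges A.C" using A.inC_G[OF j(1)] .
  have xnA: "A.g j \<notin> inputs A.C"
  proof
    assume "A.g j \<in> inputs A.C"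
    then obtain i where i: "i \<in> inputs G2" "A.g j = A.phi i" unfolding inA by blast
    show False
    proof (cases "i \<in> outputs G2")
      case True
      then have "A.g (A.rF i) = A.g j" using i phi_out by simp
      then have "A.rF i = j" using A.g_inj A.oo_rnk[OF True] j(1) by blast
      then have "i = A.oo j" using A.oo_rnk[OF True] by simp
      then show False using i(1) j(2) by simp
    next
      case False
      then have "i = A.g j" using i phi_notout by simp
      then show False using A.g_notF[OF j(1)] i(1) in2_sub by blast
    qed
  qed
  have xL: "A.g j \<in> L.ES - L.IS" using xA xnA by blast
  have jR: "j < R.nn" using j(1) R_nn by simp
  have kL: "L.key2 (A.g j) = FL (f2 (A.oo j), 1, None)"
    using L.key2S[OF xL] A.key1G[OF j(1)] FL1 by simp
  have kR: "R.key1 (A.g j) = FR (f2 (A.oo j), 1, None)"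
    using R.key1G[OF jR] Rg5 R_oo[OF j(1)] key2_psi[OF oE] FR1 by simp
  have oB: "A.oo j \<in> B.ES - B.IS" using oE j(2) by blast
  have s: "src L.C (A.g j) = src R.C (A.g j)"
    using L.srcS[OF xL] A.srcG[OF j(1)] R.srcG[OF jR] Rg5 R_oo[OF j(1)] psi_notin[OF j(2)] B.srcS[OF oB] by simp
  have t: "tgt L.C (A.g j) = tgt R.C (A.g j)"
    using L.tgtS[OF xL] A.tgtG[OF j(1)] R.tgtG[OF jR] Rg5 R_ii by simp
  show ?thesis unfolding info_def using L.inC_S[OF xL] R.inC_G[OF jR] Rg5 s t kL kR DD1 by auto
qed

lemma T6: assumes kj: "k < n" "j < m" "B.ii k = A.oo j" shows "info (B.oo k \<union> A.g j)"
proof -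
  have iE: "B.ii k \<in> edges G2" using B.ii_E[OF kj(1)] .
  have io: "B.ii k \<in> outputs G2" "A.rF (B.ii k) = j" using A.oo_props[OF kj(2)] kj(3) by auto
  have oi: "A.oo j \<in> inputs G2" "B.rS (A.oo j) = k" using B.ii_props[OF kj(1)] kj(3) by auto
  have phiA: "A.phi (B.ii k) = A.g j" using phi_out[OF io(1)] io(2) by simp
  have psiB: "B.psi (A.oo j) = B.g k" using psi_in[OF oi(1)] oi(2) by simp
  have Lg6: "L.g k = B.oo k \<union> A.g j" using Lg[OF kj(1)] phiA by simp
  have Rg6: "R.g j = B.oo k \<union> A.g j" using Rg[OF kj(2)] psiB g6[OF kj(3)] by simp
  have jR: "j < R.nn" using kj(2) R_nn by simp
  have kL: "L.key2 (B.oo k \<union> A.g j) = FL (f2 (B.ii k), 1, None)"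
    using L.key2G[OF kj(1)] Lg6 L_ii[OF kj(1)] key1_phi[OF iE] FL1 by simp
  have kR: "R.key1 (B.oo k \<union> A.g j) = FR (f2 (B.ii k), 1, None)"
    using R.key1G[OF jR] Rg6 R_oo[OF kj(2)] key2_psi[OF iE] kj(3) FR1 by simp
  have s: "src L.C (B.oo k \<union> A.g j) = src R.C (B.oo k \<union> A.g j)"
    using L.srcG[OF kj(1)] Lg6 L_oo R.srcG[OF jR] Rg6 R_oo[OF kj(2)] psiB B.srcG[OF kj(1)] by simp
  have t: "tgt L.C (B.oo k \<union> A.g j) = tgt R.C (B.oo k \<union> A.g j)"
    using L.tgtG[OF kj(1)] Lg6 L_ii[OF kj(1)] phiA A.tgtG[OF kj(2)] R.tgtG[OF jR] Rg6 R_ii by simp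
  show ?thesis unfolding info_def using L.inC_G[OF kj(1)] Lg6 R.inC_G[OF jR] Rg6 s t kL kR DD1 by auto
qed

lemma etyp_info: "etyp x \<Longrightarrow> info x"
  unfolding etyp_def using T1 T2 T3 T4 T5 T6 by blast

end


context trip begin

lemma EL_ER: "edges L.C = edges R.C"
  using L_cover R_cover etyp_info unfolding info_def by blast

lemma info_E: "x \<in> edges L.C \<Longrightarrow> info x"
  using L_cover etyp_info by blast

lemma CO_eq: "L.CO = R.CO"
proof -
  have "L.CO = {(x,y). x \<in> edges L.C \<and> y \<in> edges L.C \<and> L.key2 x < L.key2 y}"
    using KL unfolding korder_def by blast
  also have "\<dots> = {(x,y). x \<in> edges R.C \<and> y \<in> edges R.C \<and> R.key1 x < R.key1 y}"
  proof (rule set_eqI)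
    fix p :: "'a set \<times> 'a set"
    obtain x y where p: "p = (x,y)" by (cases p) auto
    have "x \<in> edges L.C \<Longrightarrow> y \<in> edges L.C \<Longrightarrow> L.key2 x < L.key2 y \<longleftrightarrow> R.key1 x < R.key1 y"
    proof -
      assume x: "x \<in> edges L.C" and y: "y \<in> edges L.C"
      obtain vx where vx: "vx \<in> DD" "L.key2 x = FL vx" "R.key1 x = FR vx" using info_E[OF x] unfolding info_def by blast
      obtain vy where vy: "vy \<in> DD" "L.key2 y = FL vy" "R.key1 y = FR vy" using info_E[OF y] unfolding info_def by blast
      show ?thesis using FL_mono[OF vx(1) vy(1)] FR_mono[OF vx(1) vy(1)] vx vy by simp
    qed
    then show "p \<in> {(x,y). x \<in> edges L.C \<and> y \<in> edges L.C \<and> L.key2 x < L.key2 y} \<longleftrightarrow>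
               p \<in> {(x,y). x \<in> edges R.C \<and> y \<in> edges R.C \<and> R.key1 x < R.key1 y}"
      unfolding p using EL_ER by auto
  qed
  also have "\<dots> = R.CO"
    using KR unfolding korder_def by blast
  finally show ?thesis .
qed

lemma V_eq: "verts L.C = verts R.C"
proof -
  have a: "verts L.C = (verts G1 - sinks G1) \<union> (verts A.C - sources A.C)" by (rule L.VC)
  have b: "verts A.C = (verts G2 - sinks G2) \<union> (verts G3 - sources G3)" by (rule A.VC)
  have c: "sources A.C = sources G2 - sinks G2" by (rule A.sourcesC)
  have d: "verts R.C = (verts B.C - sinks B.C) \<union> (verts G3 - sources G3)" by (rule R.VC)
  have e: "verts B.C = (verts G1 - sinks G1) \<union> (verts G2 - sources G2)" by (rule B.VC)
  have f: "sinks B.C = sinks G2 - sources G2" by (rule B.sinksC)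
  have s2: "sources G2 \<subseteq> verts G2" "sinks G2 \<subseteq> verts G2" unfolding sources_def sinks_def by auto
  show ?thesis unfolding a b c d e f using s2 v12 v23 by blast
qed

lemma final:
  "let L = comp_graph (comp_graph G3 R3 G2 R2) (comp_order G3 R3 G2 R2) G1 R1;
       R = comp_graph G3 R3 (comp_graph G2 R2 G1 R1) (comp_order G2 R2 G1 R1)
   in verts L = verts R \<and> edges L = edges R \<and>
      (\<forall>e \<in> edges L. src L e = src R e \<and> tgt L e = tgt R e) \<and>
      comp_order (comp_graph G3 R3 G2 R2) (comp_order G3 R3 G2 R2) G1 R1
      = comp_order G3 R3 (comp_graph G2 R2 G1 R1) (comp_order G2 R2 G1 R1)"
  unfolding Let_def
  using V_eq EL_ER CO_eq info_E unfolding info_def by blast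

end

theorem proposition2p1:
  fixes G1 G2 G3 :: "('v, 'a set) pgraph"
    and R1 R2 R3 :: "('a set \<times> 'a set) set"
  assumes "pop G1 R1" and "pop G2 R2" and "pop G3 R3"
    and "card (outputs G1) = card (inputs G2)"
    and "card (outputs G2) = card (inputs G3)"
    and "disjoint_names G1" and "disjoint_names G2" and "disjoint_names G3"
    and "\<Union>(edges G1) \<inter> \<Union>(edges G2) = {}"
    and "\<Union>(edges G1) \<inter> \<Union>(edges G3) = {}"
    and "\<Union>(edges G2) \<inter> \<Union>(edges G3) = {}"
    and "verts G1 \<inter> verts G2 = {}"
    and "verts G1 \<inter> verts G3 = {}"
    and "verts G2 \<inter> verts G3 = {}"
  shows "let L = comp_graph (comp_graph G3 R3 G2 R2) (comp_order G3 R3 G2 R2) G1 R1;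
             R = comp_graph G3 R3 (comp_graph G2 R2 G1 R1) (comp_order G2 R2 G1 R1)
         in verts L = verts R \<and> edges L = edges R \<and>
            (\<forall>e \<in> edges L. src L e = src R e \<and> tgt L e = tgt R e) \<and>
            comp_order (comp_graph G3 R3 G2 R2) (comp_order G3 R3 G2 R2) G1 R1
            = comp_order G3 R3 (comp_graph G2 R2 G1 R1) (comp_order G2 R2 G1 R1)"
proof -
  interpret trip G1 G2 G3 R1 R2 R3
    using assms by (simp add: trip_def)
  show ?thesis by (rule final)
qed

end
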